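(* The class of Subgraph MPNNs cannot count $8$-cycles at graph level, and cannot count $8$-paths at graph level. That is, there exist graphs $G_1,G_2$ with $C(8\text{-cycle},G_1)\neq C(8\text{-cycle},G_2)$ such that $h_{G_1}=h_{G_2}$ for every Subgraph MPNN, and there exist graphs $G_1,G_2$ with $C(8\text{-path},G_1)\neq C(8\text{-path},G_2)$ such that $h_{G_1}=h_{G_2}$ for every Subgraph MPNN.
   Context: Graphs are finite, simple, undirected, $G=(V,E)$, possibly carrying node attributes $x_v$ and edge attributes $e_{u,v}$ (a fixed constant when absent). $N(v)$ is the neighbour set of $v$. For $L\ge 1$, an $L$-path is a sequence of edges $(v_1,v_2),(v_2,v_3),\dots,(v_L,v_{L+1})$ of $G$ with $v_1,\dots,v_{L+1}$ pairwise distinct; for $L\ge 3$, an $L$-cycle is such a sequence with $v_1,\dots,v_L$ pairwise distinct and $v_{L+1}=v_1$. Two paths (resp. cycles) are identified when their edge sets coincide. $C(L\text{-cycle},G)$ and $C(L\text{-path},G)$ denote the numbers of inequivalent $L$-cycles and $L$-paths of $G$. A class $\mathcal F$ of functions on graphs can count a substructure $S$ at graph level if for all graphs $G_1,G_2$ with $C(S,G_1)\ne C(S,G_2)$ there is $f\in\mathcal F$ with $f(G_1)\neq f(G_2)$. Subgraph MPNNs. A Subgraph MPNN is specified by: (1) a subgraph extraction rule, either node deletion, $(V_i,E_i)=(V\setminus\{i\},E\setminus\{(i,j):j\in N(i)\})$, or the $K$-hop ego-network for some integer $K\ge1$, i.e. $(V_i,E_i)$ is the subgraph of $G$ induced by the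 nodes at shortest-path distance at most $K$ from $i$; (2) a node labeling $z_{i,j}$, which is either absent, identity labeling $z_{i,j}=\mathbb 1_{i=j}$, or shortest path distance $z_{i,j}=\mathrm{spd}(i,j)$ in $G$; (3) a number of layers $T$ and arbitrary functions $M_t$ (with values in some $\mathbb R^{d_t}$) and $U_t$, $t=0,\dots,T-1$; (4) arbitrary readout functions $R_{\text{node}},R_{\text{graph}}$ on finite multisets. For each root $i\in V$ and $j\in V_i$: $h^{(0)}_{i,j}=x_j\oplus z_{i,j}$ ($\oplus$ = concatenation), $h^{(t+1)}_{i,j}=U_t\big(h^{(t)}_{i,j},\sum_{k\in N_i(j)}M_t(h^{(t)}_{i,j},h^{(t)}_{i,k},e_{j,k})\big)$ where $N_i(j)=\{k\in V_i:(j,k)\in E_i\}$; then $h_i=R_{\text{node}}(\{\!\{h^{(T)}_{i,j}:j\in V_i\}\!\})$ and $h_G=R_{\text{graph}}(\{\!\{h_i:i\in V\}\!\})$. The graph-level function computed is $G\mapsto h_G$, and the class of Subgraph MPNNs consists of all such choices. *)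

theory Defs
  imports Complex_Main "HOL-Library.Multiset" "HOL-Library.Extended_Nat"
begin

record graph =
  verts :: "nat set"
  adj   :: "nat \<Rightarrow> nat \<Rightarrow> bool"
  nattr :: "nat \<Rightarrow> real list"
  eattr :: "nat \<Rightarrow> nat \<Rightarrow> real list"

definition wf_graph :: "graph \<Rightarrow> bool" where
  "wf_graph G \<longleftrightarrow> finite (verts G) \<and>
     (\<forall>u v. adj G u v \<longrightarrow> u \<in> verts G \<and> v \<in> verts G \<and> u \<noteq> v \<and> adj G v u
                         \<and> eattr G u v = eattr G v u)"

definition is_walk :: "graph \<Rightarrow> nat \<Rightarrow> nat list \<Rightarrow> bool" where
  "is_walk G L vs \<longleftrightarrow> length vs = Suc L \<and> (\<forall>k<L. adj G (vs ! k) (vs ! Suc k))"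

definition walk_edges :: "nat \<Rightarrow> nat list \<Rightarrow> nat set set" where
  "walk_edges L vs = {{vs ! k, vs ! Suc k} | k. k < L}"

definition is_path :: "graph \<Rightarrow> nat \<Rightarrow> nat list \<Rightarrow> bool" where
  "is_path G L vs \<longleftrightarrow> 1 \<le> L \<and> is_walk G L vs \<and> distinct vs"

definition is_cycle :: "graph \<Rightarrow> nat \<Rightarrow> nat list \<Rightarrow> bool" where
  "is_cycle G L vs \<longleftrightarrow> 3 \<le> L \<and> is_walk G L vs \<and> distinct (take L vs) \<and> vs ! L = vs ! 0"

text \<open>Numbers of inequivalent L-paths / L-cycles (identified by their edge sets).\<close>
definition count_paths :: "nat \<Rightarrow> graph \<Rightarrow> nat" where
  "count_paths L G = card (walk_edges L ` {vs. is_path G L vs})"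

definition count_cycles :: "nat \<Rightarrow> graph \<Rightarrow> nat" where
  "count_cycles L G = card (walk_edges L ` {vs. is_cycle G L vs})"

text \<open>Shortest path distance in G (infinity if unreachable).\<close>
definition spd :: "graph \<Rightarrow> nat \<Rightarrow> nat \<Rightarrow> enat" where
  "spd G i j = Inf {enat n | n. \<exists>vs. is_walk G n vs \<and> vs ! 0 = i \<and> vs ! n = j}"

datatype extraction = NodeDeletion | EgoNet nat
datatype labeling = NoLabel | IdentityLabel | SpdLabel

definition sub_verts :: "extraction \<Rightarrow> graph \<Rightarrow> nat \<Rightarrow> nat set" where
  "sub_verts ex G i = (case ex of
      NodeDeletion \<Rightarrow> verts G - {i}
    | EgoNet K \<Rightarrow> {j \<in> verts G. spd G i j \<le> enat K})"

text \<open>Edges of the subgraph: for node deletion, edges not incident to i; for the ego-network,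
  the induced subgraph.\<close>
definition sub_adj :: "extraction \<Rightarrow> graph \<Rightarrow> nat \<Rightarrow> nat \<Rightarrow> nat \<Rightarrow> bool" where
  "sub_adj ex G i u v \<longleftrightarrow> adj G u v \<and> u \<in> sub_verts ex G i \<and> v \<in> sub_verts ex G i"

definition node_label :: "labeling \<Rightarrow> graph \<Rightarrow> nat \<Rightarrow> nat \<Rightarrow> real list" where
  "node_label lb G i j = (case lb of
      NoLabel \<Rightarrow> []
    | IdentityLabel \<Rightarrow> [if i = j then 1 else 0]
    | SpdLabel \<Rightarrow> (case spd G i j of enat n \<Rightarrow> [real n] | \<infinity> \<Rightarrow> [-1]))"

text \<open>Hidden states are real vectors (real lists); messages are vectors in R^d, represented
  as functions nat => real vanishing from index d on (constraint in valid_mpnn).\<close>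
record mpnn =
  ext    :: extraction
  lab    :: labeling
  layers :: nat
  msg    :: "nat \<Rightarrow> real list \<Rightarrow> real list \<Rightarrow> real list \<Rightarrow> nat \<Rightarrow> real"
  upd    :: "nat \<Rightarrow> real list \<Rightarrow> (nat \<Rightarrow> real) \<Rightarrow> real list"
  rnode  :: "real list multiset \<Rightarrow> real list"
  rgraph :: "real list multiset \<Rightarrow> real list"

definition valid_mpnn :: "mpnn \<Rightarrow> bool" where
  "valid_mpnn P \<longleftrightarrow> (\<forall>K. ext P = EgoNet K \<longrightarrow> 1 \<le> K) \<and>
     (\<forall>t < layers P. \<exists>d. \<forall>a b c n. d \<le> n \<longrightarrow> msg P t a b c n = 0)"

fun hidden :: "mpnn \<Rightarrow> graph \<Rightarrow> nat \<Rightarrow> nat \<Rightarrow> nat \<Rightarrow> real list" where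
  "hidden P G 0 i j = nattr G j @ node_label (lab P) G i j"
| "hidden P G (Suc t) i j =
     upd P t (hidden P G t i j)
       (\<lambda>c. \<Sum>k \<in> {k \<in> sub_verts (ext P) G i. sub_adj (ext P) G i j k}.
               msg P t (hidden P G t i j) (hidden P G t i k) (eattr G j k) c)"

definition root_emb :: "mpnn \<Rightarrow> graph \<Rightarrow> nat \<Rightarrow> real list" where
  "root_emb P G i = rnode P (image_mset (hidden P G (layers P) i) (mset_set (sub_verts (ext P) G i)))"

definition mpnn_out :: "mpnn \<Rightarrow> graph \<Rightarrow> real list" where
  "mpnn_out P G = rgraph P (image_mset (root_emb P G) (mset_set (verts G)))"

definition subgraph_mpnns :: "(graph \<Rightarrow> real list) set" where
  "subgraph_mpnns = {mpnn_out P | P. valid_mpnn P}"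

definition can_count_graph_level :: "(graph \<Rightarrow> 'b) set \<Rightarrow> (graph \<Rightarrow> nat) \<Rightarrow> bool" where
  "can_count_graph_level F C \<longleftrightarrow>
     (\<forall>G1 G2. wf_graph G1 \<longrightarrow> wf_graph G2 \<longrightarrow> C G1 \<noteq> C G2 \<longrightarrow> (\<exists>f\<in>F. f G1 \<noteq> f G2))"

end

theory Submission
  imports Defs
begin

definition dd :: "graph \<Rightarrow> nat \<Rightarrow> nat \<Rightarrow> nat" where
  "dd G i j = (if i = j then 0 else if adj G i j then 1 else 2)"

definition srg :: "graph \<Rightarrow> nat \<Rightarrow> nat \<Rightarrow> nat \<Rightarrow> nat \<Rightarrow> bool" where
  "srg G n k l m \<longleftrightarrow> wf_graph G \<and> card (verts G) = n \<and>
    (\<forall>i\<in>verts G. card {x\<in>verts G. adj G i x} = k) \<and>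
    (\<forall>i\<in>verts G. \<forall>j\<in>verts G. i \<noteq> j \<longrightarrow>
        card {x\<in>verts G. adj G i x \<and> adj G j x} = (if adj G i j then l else m)) \<and>
    1 \<le> m \<and> nattr G = (\<lambda>_. []) \<and> (\<forall>u v. eattr G u v = [])"

fun inS :: "extraction \<Rightarrow> nat \<Rightarrow> bool" where
  "inS NodeDeletion d = (d \<noteq> 0)"
| "inS (EgoNet K) d = (d \<le> K)"

definition NN :: "nat \<Rightarrow> nat \<Rightarrow> nat \<Rightarrow> nat \<Rightarrow> nat \<Rightarrow> nat" where
  "NN k l m d c = (if d = 0 then (if c = 1 then k else 0)
     else if d = 1 then (if c = 0 then 1 else if c = 1 then l else if c = 2 then k - 1 - l else 0)
     else (if c = 1 then m else if c = 2 then k - m else 0))"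

fun labf :: "labeling \<Rightarrow> nat \<Rightarrow> real list" where
  "labf NoLabel d = []"
| "labf IdentityLabel d = [if d = 0 then 1 else 0]"
| "labf SpdLabel d = [real d]"

fun Fh :: "mpnn \<Rightarrow> nat \<Rightarrow> nat \<Rightarrow> nat \<Rightarrow> nat \<Rightarrow> nat \<Rightarrow> real list" where
  "Fh P k l m 0 d = labf (lab P) d"
| "Fh P k l m (Suc t) d = upd P t (Fh P k l m t d)
     (\<lambda>c. \<Sum>d'<3. (if inS (ext P) d' then real (NN k l m d d') else 0) *
            msg P t (Fh P k l m t d) (Fh P k l m t d') [] c)"

definition Mcl :: "extraction \<Rightarrow> nat \<Rightarrow> nat \<Rightarrow> nat multiset" where
  "Mcl ex n k = filter_mset (inS ex) ({#0#} + replicate_mset k 1 + replicate_mset (n - 1 - k) 2)"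

lemma srgD:
  assumes "srg G n k l m"
  shows "wf_graph G" "card (verts G) = n" "\<And>i. i\<in>verts G \<Longrightarrow> card {x\<in>verts G. adj G i x} = k"
    "\<And>i j. i\<in>verts G \<Longrightarrow> j\<in>verts G \<Longrightarrow> i \<noteq> j \<Longrightarrow>
        card {x\<in>verts G. adj G i x \<and> adj G j x} = (if adj G i j then l else m)"
    "1 \<le> m" "nattr G = (\<lambda>_. [])" "\<And>u v. eattr G u v = []"
  using assms unfolding srg_def by auto

lemma wfD:
  assumes "wf_graph G" "adj G u v"
  shows "u \<in> verts G" "v \<in> verts G" "u \<noteq> v" "adj G v u"
  using assms unfolding wf_graph_def by auto

lemma wf_fin: "wf_graph G \<Longrightarrow> finite (verts G)"
  unfolding wf_graph_def by auto

lemma spd_eq: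
  assumes S: "srg G n k l m" and i: "i \<in> verts G" and j: "j \<in> verts G"
  shows "spd G i j = enat (dd G i j)"
proof -
  let ?A = "{enat n | n. \<exists>vs. is_walk G n vs \<and> vs ! 0 = i \<and> vs ! n = j}"
  have wf: "wf_graph G" using srgD[OF S] by auto
  have low: "enat (dd G i j) \<le> x" if xA: "x \<in> ?A" for x
  proof -
    obtain N vs where x: "x = enat N" and w: "is_walk G N vs" "vs ! 0 = i" "vs ! N = j"
      using xA by blast
    show ?thesis
    proof (cases N)
      case 0
      then have "i = j" using w by auto
      then show ?thesis using x by (simp add: dd_def)
    next
      case (Suc n')
      show ?thesis
      proof (cases n')
        case 0
        then have "adj G i j" using w Suc unfolding is_walk_def by force
        then show ?thesis using x Suc 0 by (simp add: dd_def one_enat_def)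
      next
        case (Suc n'')
        then show ?thesis using x \<open>N = Suc n'\<close> by (simp add: dd_def numeral_eq_enat)
      qed
    qed
  qed
  have mem: "enat (dd G i j) \<in> ?A"
  proof (cases "i = j")
    case True
    have "is_walk G 0 [i]" by (simp add: is_walk_def)
    then show ?thesis using True by (force simp: dd_def)
  next
    case False
    show ?thesis
    proof (cases "adj G i j")
      case True
      have "is_walk G 1 [i, j]" using True by (simp add: is_walk_def)
      then show ?thesis using True False by (force simp: dd_def)
    next
      case nadj: False
      have "card {x\<in>verts G. adj G i x \<and> adj G j x} = m" using srgD(4)[OF S i j False] nadj by simp
      then have "{x\<in>verts G. adj G i x \<and> adj G j x} \<noteq> {}" using srgD(5)[OF S] by (metis card.empty not_one_le_zero)
      then obtain x where x: "adj G i x" "adj G j x" by auto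
      have "adj G x j" using wfD[OF wf x(2)] by simp
      then have "is_walk G 2 [i, x, j]" using x by (simp add: is_walk_def less_Suc_eq numeral_2_eq_2)
      then show ?thesis using nadj False by (force simp: dd_def)
    qed
  qed
  show ?thesis unfolding spd_def
    by (rule antisym[OF Inf_lower[OF mem] Inf_greatest]) (use low in auto)
qed

lemma dd_lt3: "dd G i j < 3" by (simp add: dd_def)
lemma dd_0: "dd G i j = 0 \<longleftrightarrow> i = j" by (simp add: dd_def)

lemma sub_verts_eq:
  assumes S: "srg G n k l m" and i: "i \<in> verts G"
  shows "sub_verts ex G i = {x\<in>verts G. inS ex (dd G i x)}"
proof (cases ex)
  case NodeDeletion
  then show ?thesis by (auto simp: sub_verts_def dd_0)
next
  case (EgoNet K)
  then show ?thesis using spd_eq[OF S i] by (auto simp: sub_verts_def)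
qed

lemma core_count:
  assumes S: "srg G n k l m" and i: "i \<in> verts G" and j: "j \<in> verts G"
  shows "card {x\<in>verts G. adj G j x \<and> dd G i x = c} = NN k l m (dd G i j) c"
proof -
  have wf: "wf_graph G" and fin: "finite (verts G)" using srgD[OF S] wf_fin by auto
  have sym: "\<And>u v. adj G u v \<Longrightarrow> adj G v u" and irr: "\<And>u. \<not> adj G u u"
    and inV: "\<And>u v. adj G u v \<Longrightarrow> v \<in> verts G"
    using wfD[OF wf] by blast+
  let ?Nj = "{x\<in>verts G. adj G j x}"
  let ?C = "{x\<in>verts G. adj G i x \<and> adj G j x}"
  have Nj: "card ?Nj = k" using srgD(3)[OF S j] .
  show ?thesis
  proof (cases "i = j")
    case True
    then have "{x\<in>verts G. adj G j x \<and> dd G i x = c} = (if c = 1 then ?Nj else {})"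
      using irr by (auto simp: dd_def)
    then show ?thesis using True Nj by (simp add: NN_def dd_def)
  next
    case ij: False
    have C: "card ?C = (if adj G i j then l else m)" using srgD(4)[OF S i j ij] .
    show ?thesis
    proof (cases "adj G i j")
      case True
      have c0: "{x\<in>verts G. adj G j x \<and> dd G i x = 0} = {i}" using True sym i by (auto simp: dd_def)
      have c1: "{x\<in>verts G. adj G j x \<and> dd G i x = 1} = ?C" using irr by (auto simp: dd_def)
      have c2: "{x\<in>verts G. adj G j x \<and> dd G i x = 2} = ?Nj - insert i ?C" by (auto simp: dd_def)
      have sub: "insert i ?C \<subseteq> ?Nj" using True sym i by auto
      have "i \<notin> ?C" using irr by auto
      then have ci: "card (insert i ?C) = l + 1" using C True fin by simp
      have c2': "card (?Nj - insert i ?C) = k - 1 - l"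
        using card_Diff_subset[OF finite_subset[OF sub] sub] fin Nj ci by simp
      have c3: "c \<ge> 3 \<Longrightarrow> card {x\<in>verts G. adj G j x \<and> dd G i x = c} = 0"
      proof -
        assume "c \<ge> 3" then have "{x\<in>verts G. adj G j x \<and> dd G i x = c} = {}" using dd_lt3[of G i] not_less by blast
        then show ?thesis by (metis card.empty)
      qed
      have d: "dd G i j = 1" using True ij by (simp add: dd_def)
      have "c = 0 \<or> c = 1 \<or> c = 2 \<or> c \<ge> 3" by auto
      then show ?thesis
      proof (elim disjE)
        assume "c = 0" then show ?thesis using c0 d by (simp add: NN_def)
      next
        assume "c = 1" then show ?thesis using c1 C True d by (simp add: NN_def)
      next
        assume "c = 2" then show ?thesis using c2 c2' d by (simp add: NN_def)
      next
        assume "c \<ge> 3" then show ?thesis using c3 d by (simp add: NN_def)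
      qed
    next
      case False
      have c0: "{x\<in>verts G. adj G j x \<and> dd G i x = 0} = {}" using False sym by (auto simp: dd_def)
      have c1: "{x\<in>verts G. adj G j x \<and> dd G i x = 1} = ?C" using irr by (auto simp: dd_def)
      have c2: "{x\<in>verts G. adj G j x \<and> dd G i x = 2} = ?Nj - ?C" using False sym by (auto simp: dd_def)
      have sub: "?C \<subseteq> ?Nj" by auto
      have c2': "card (?Nj - ?C) = k - m"
        using card_Diff_subset[OF finite_subset[OF sub] sub] fin Nj C False by simp
      have c3: "c \<ge> 3 \<Longrightarrow> card {x\<in>verts G. adj G j x \<and> dd G i x = c} = 0"
      proof -
        assume "c \<ge> 3" then have "{x\<in>verts G. adj G j x \<and> dd G i x = c} = {}" using dd_lt3[of G i] not_less by blast
        then show ?thesis by (metis card.empty)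
      qed
      have d: "dd G i j = 2" using False ij by (simp add: dd_def)
      have "c = 0 \<or> c = 1 \<or> c = 2 \<or> c \<ge> 3" by auto
      then show ?thesis
      proof (elim disjE)
        assume "c = 0" then show ?thesis using d by (simp only: c0 card.empty) (simp add: NN_def)
      next
        assume "c = 1" then show ?thesis using c1 C False d by (simp add: NN_def)
      next
        assume "c = 2" then show ?thesis using c2 c2' d by (simp add: NN_def)
      next
        assume "c \<ge> 3" then show ?thesis using c3 d by (simp add: NN_def)
      qed
    qed
  qed
qed

lemma class_count:
  assumes S: "srg G n k l m" and i: "i \<in> verts G"
  shows "card {x\<in>verts G. dd G i x = c} = (if c = 0 then 1 else if c = 1 then k else if c = 2 then n - 1 - k else 0)"
proof -
  have wf: "wf_graph G" and fin: "finite (verts G)" using srgD[OF S] wf_fin by auto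
  have irr: "\<And>u. \<not> adj G u u" using wfD[OF wf] by blast
  let ?Ni = "{x\<in>verts G. adj G i x}"
  have Ni: "card ?Ni = k" using srgD(3)[OF S i] .
  have c0: "{x\<in>verts G. dd G i x = 0} = {i}" using i by (auto simp: dd_def)
  have c1: "{x\<in>verts G. dd G i x = 1} = ?Ni" using irr by (auto simp: dd_def)
  have c2: "{x\<in>verts G. dd G i x = 2} = verts G - insert i ?Ni" by (auto simp: dd_def)
  have sub: "insert i ?Ni \<subseteq> verts G" using i by auto
  have "card (insert i ?Ni) = k + 1" using irr fin Ni by simp
  then have c2': "card (verts G - insert i ?Ni) = n - 1 - k"
    using card_Diff_subset[OF finite_subset[OF sub fin] sub] srgD(2)[OF S] by simp
  have c3: "c \<ge> 3 \<Longrightarrow> card {x\<in>verts G. dd G i x = c} = 0"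
  proof -
    assume "c \<ge> 3" then have "{x\<in>verts G. dd G i x = c} = {}" using dd_lt3[of G i] not_less by blast
    then show ?thesis by (metis card.empty)
  qed
  have "c = 0 \<or> c = 1 \<or> c = 2 \<or> c \<ge> 3" by auto
  then show ?thesis
  proof (elim disjE)
    assume "c = 0" then show ?thesis using c0 by simp
  next
    assume "c = 1" then show ?thesis using c1 Ni by simp
  next
    assume "c = 2" then show ?thesis using c2 c2' by simp
  next
    assume "c \<ge> 3" then show ?thesis using c3 by simp
  qed
qed

lemma group_sum:
  fixes g :: "nat \<Rightarrow> real"
  assumes "finite X" "\<And>x. x \<in> X \<Longrightarrow> f x < 3"
  shows "(\<Sum>x\<in>X. g (f x)) = (\<Sum>d<3. real (card {x\<in>X. f x = d}) * g d)"
proof -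
  have "(\<Sum>x\<in>X. g (f x)) = (\<Sum>d<3. \<Sum>x\<in>{x\<in>X. f x = d}. g (f x))"
    using sum.group[of X "{..<3}" f "\<lambda>x. g (f x)"] assms by (auto simp: image_subset_iff)
  also have "\<dots> = (\<Sum>d<3. \<Sum>x\<in>{x\<in>X. f x = d}. g d)"
    by (rule sum.cong) auto
  also have "\<dots> = (\<Sum>d<3. real (card {x\<in>X. f x = d}) * g d)" by simp
  finally show ?thesis .
qed

lemma hidden_eq:
  assumes S: "srg G n k l m" and i: "i \<in> verts G"
  shows "j \<in> sub_verts (ext P) G i \<Longrightarrow> hidden P G t i j = Fh P k l m t (dd G i j)"
proof (induction t arbitrary: j)
  case 0
  have j: "j \<in> verts G" using 0 sub_verts_eq[OF S i] by auto
  show ?case using spd_eq[OF S i j] srgD(6)[OF S]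
    by (cases "lab P") (auto simp: node_label_def dd_0)
next
  case (Suc t)
  let ?V = "sub_verts (ext P) G i"
  let ?X = "{x \<in> ?V. sub_adj (ext P) G i j x}"
  have j: "j \<in> verts G" using Suc.prems sub_verts_eq[OF S i] by auto
  have fin: "finite (verts G)" using srgD(1)[OF S] wf_fin by auto
  have Xfin: "finite ?X" using fin sub_verts_eq[OF S i] by auto
  have cnt: "real (card {x\<in>?V. sub_adj (ext P) G i j x \<and> dd G i x = d}) = (if inS (ext P) d then real (NN k l m (dd G i j) d) else 0)" for d
  proof -
    have "{x\<in>?V. sub_adj (ext P) G i j x \<and> dd G i x = d} = (if inS (ext P) d then {x\<in>verts G. adj G j x \<and> dd G i x = d} else {})"
      using Suc.prems sub_verts_eq[OF S i] srgD(1)[OF S] wfD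
      by (auto simp: sub_adj_def)
    then show ?thesis using core_count[OF S i j] by simp
  qed
  have "(\<lambda>c. \<Sum>x\<in>?X. msg P t (hidden P G t i j) (hidden P G t i x) (eattr G j x) c)
      = (\<lambda>c. \<Sum>x\<in>?X. msg P t (Fh P k l m t (dd G i j)) (Fh P k l m t (dd G i x)) [] c)"
    using Suc.IH Suc.prems srgD(7)[OF S] by (intro ext sum.cong) auto
  also have "\<dots> = (\<lambda>c. \<Sum>d<3. (if inS (ext P) d then real (NN k l m (dd G i j) d) else 0) *
            msg P t (Fh P k l m t (dd G i j)) (Fh P k l m t d) [] c)"
  proof (rule ext)
    fix c
    show "(\<Sum>x\<in>?X. msg P t (Fh P k l m t (dd G i j)) (Fh P k l m t (dd G i x)) [] c) =
          (\<Sum>d<3. (if inS (ext P) d then real (NN k l m (dd G i j) d) else 0) *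
            msg P t (Fh P k l m t (dd G i j)) (Fh P k l m t d) [] c)"
      using group_sum[OF Xfin, of "dd G i" "\<lambda>d. msg P t (Fh P k l m t (dd G i j)) (Fh P k l m t d) [] c"]
      by (simp add: dd_lt3 cnt)
  qed
  finally show ?case using Suc.IH[OF Suc.prems] by simp
qed

lemma count_img_mset_set:
  "finite S \<Longrightarrow> count (image_mset f (mset_set S)) c = card {x\<in>S. f x = c}"
proof (induction S rule: finite_induct)
  case empty
  then show ?case by simp
next
  case (insert x F)
  have "{y\<in>insert x F. f y = c} = (if f x = c then insert x {y\<in>F. f y = c} else {y\<in>F. f y = c})" by auto
  then show ?case using insert by auto
qed

lemma img_const_mset: "image_mset (\<lambda>_. c) M = replicate_mset (size M) c"
  by (induction M) auto

lemma mset_classes: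
  assumes S: "srg G n k l m" and i: "i \<in> verts G"
  shows "image_mset (dd G i) (mset_set (sub_verts ex G i)) = Mcl ex n k"
proof (rule multiset_eqI)
  fix c
  have fin: "finite (verts G)" using srgD(1)[OF S] wf_fin by auto
  have "{x\<in>sub_verts ex G i. dd G i x = c} = (if inS ex c then {x\<in>verts G. dd G i x = c} else {})"
    using sub_verts_eq[OF S i] by auto
  then have "count (image_mset (dd G i) (mset_set (sub_verts ex G i))) c =
     (if inS ex c then (if c = 0 then 1 else if c = 1 then k else if c = 2 then n - 1 - k else 0) else 0)"
    using count_img_mset_set[of "sub_verts ex G i" "dd G i" c] sub_verts_eq[OF S i] fin class_count[OF S i, of c]
    by simp
  then show "count (image_mset (dd G i) (mset_set (sub_verts ex G i))) c = count (Mcl ex n k) c"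
    by (simp add: Mcl_def)
qed

lemma srg_out:
  assumes S: "srg G n k l m"
  shows "mpnn_out P G = rgraph P (replicate_mset n (rnode P (image_mset (Fh P k l m (layers P)) (Mcl (ext P) n k))))"
proof -
  have re: "root_emb P G i = rnode P (image_mset (Fh P k l m (layers P)) (Mcl (ext P) n k))" if i: "i \<in> verts G" for i
  proof -
    have fin: "finite (verts G)" using srgD(1)[OF S] wf_fin by auto
    have "image_mset (hidden P G (layers P) i) (mset_set (sub_verts (ext P) G i))
        = image_mset (\<lambda>j. Fh P k l m (layers P) (dd G i j)) (mset_set (sub_verts (ext P) G i))"
    proof (rule image_mset_cong)
      fix x assume "x \<in># mset_set (sub_verts (ext P) G i)"
      then have "x \<in> sub_verts (ext P) G i"
        using fin sub_verts_eq[OF S i] by (simp split: if_splits)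
      then show "hidden P G (layers P) i x = Fh P k l m (layers P) (dd G i x)"
        using hidden_eq[OF S i] by blast
    qed
    also have "\<dots> = image_mset (Fh P k l m (layers P)) (image_mset (dd G i) (mset_set (sub_verts (ext P) G i)))"
      by (simp add: image_mset.compositionality comp_def)
    finally show ?thesis unfolding root_emb_def using mset_classes[OF S i] by simp
  qed
  have "image_mset (root_emb P G) (mset_set (verts G))
      = image_mset (\<lambda>_. rnode P (image_mset (Fh P k l m (layers P)) (Mcl (ext P) n k))) (mset_set (verts G))"
    by (rule image_mset_cong) (use re srgD(1)[OF S] wf_fin in auto)
  then show ?thesis unfolding mpnn_out_def img_const_mset using srgD(2)[OF S] by simp
qed

lemma srg_indist:
  assumes "srg G1 n k l m" "srg G2 n k l m"
  shows "mpnn_out P G1 = mpnn_out P G2"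
  using srg_out[OF assms(1)] srg_out[OF assms(2)] by simp

lemma we_image: "walk_edges L vs = (\<lambda>k. {vs!k, vs!Suc k}) ` {..<L}"
  by (auto simp: walk_edges_def)

lemma we_map: "length vs = Suc L \<Longrightarrow> walk_edges L (map \<phi> vs) = (`) \<phi> ` walk_edges L vs"
  unfolding we_image image_image by (rule image_cong) auto

definition Fib :: "(nat list \<Rightarrow> bool) \<Rightarrow> nat \<Rightarrow> nat set set \<Rightarrow> nat list set" where
  "Fib Q L E = {vs. Q vs \<and> walk_edges L vs = E}"

lemma set_sub_we:
  assumes "length vs = Suc L" "1 \<le> L"
  shows "set vs \<subseteq> \<Union> (walk_edges L vs)"
proof
  fix x assume "x \<in> set vs"
  then obtain k where k: "k < Suc L" "x = vs ! k" using assms by (auto simp: in_set_conv_nth)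
  show "x \<in> \<Union> (walk_edges L vs)"
  proof (cases "k < L")
    case True
    then show ?thesis using k unfolding we_image by auto
  next
    case False
    then have "k = Suc (L - 1)" using k assms by auto
    then show ?thesis using k assms unfolding we_image
      by (auto intro!: bexI[of _ "L - 1"])
  qed
qed

lemma relabel_card:
  assumes L: "1 \<le> L"
    and Qlen: "\<And>vs. Q vs \<Longrightarrow> length vs = Suc L"
    and Qmap: "\<And>vs \<phi>. Q vs \<Longrightarrow> inj_on \<phi> (set vs) \<Longrightarrow> Q (map \<phi> vs)"
    and inj: "inj_on \<phi> (\<Union>E)"
  shows "card (Fib Q L ((`) \<phi> ` E)) = card (Fib Q L E)"
proof -
  have sub: "set vs \<subseteq> \<Union>E" if "vs \<in> Fib Q L E" for vs
    using that set_sub_we[OF Qlen L] by (auto simp: Fib_def)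
  let ?\<psi> = "inv_into (\<Union>E) \<phi>"
  have "Fib Q L ((`) \<phi> ` E) = map \<phi> ` Fib Q L E"
  proof
    show "map \<phi> ` Fib Q L E \<subseteq> Fib Q L ((`) \<phi> ` E)"
    proof
      fix ws assume "ws \<in> map \<phi> ` Fib Q L E"
      then obtain vs where vs: "vs \<in> Fib Q L E" "ws = map \<phi> vs" by auto
      have "inj_on \<phi> (set vs)" using inj_on_subset[OF inj sub[OF vs(1)]] .
      then show "ws \<in> Fib Q L ((`) \<phi> ` E)"
        using vs Qmap we_map[OF Qlen] by (auto simp: Fib_def)
    qed
  next
    show "Fib Q L ((`) \<phi> ` E) \<subseteq> map \<phi> ` Fib Q L E"
    proof
      fix ws assume ws: "ws \<in> Fib Q L ((`) \<phi> ` E)"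
      have Qws: "Q ws" using ws by (auto simp: Fib_def)
      have wsE: "walk_edges L ws = (`) \<phi> ` E" using ws by (auto simp: Fib_def)
      have "set ws \<subseteq> \<Union> (walk_edges L ws)" using set_sub_we[OF Qlen[OF Qws] L] .
      also have "\<dots> = \<phi> ` \<Union>E" unfolding wsE by auto
      finally have wsub: "set ws \<subseteq> \<phi> ` \<Union>E" .
      have injpsi: "inj_on ?\<psi> (set ws)"
        using inj_on_subset[OF inj_on_inv_into[OF subset_refl] wsub] .
      have bk: "map \<phi> (map ?\<psi> ws) = ws"
      proof -
        have "\<phi> (?\<psi> x) = x" if "x \<in> set ws" for x using wsub that f_inv_into_f[of x \<phi> "\<Union>E"] by blast
        then show ?thesis by (simp add: map_idI)
      qed
      have "walk_edges L (map ?\<psi> ws) = (`) ?\<psi> ` ((`) \<phi> ` E)"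
        using ws we_map[OF Qlen] by (auto simp: Fib_def)
      also have "\<dots> = E"
      proof -
        have "(`) ?\<psi> ((`) \<phi> e) = e" if "e \<in> E" for e
        proof -
          have "e \<subseteq> \<Union>E" using that by auto
          then show ?thesis using inv_into_f_f[OF inj] by (force simp: image_image)
        qed
        then show ?thesis by (force simp: image_image)
      qed
      finally have "map ?\<psi> ws \<in> Fib Q L E" using ws Qmap[OF _ injpsi] by (auto simp: Fib_def)
      then show "ws \<in> map \<phi> ` Fib Q L E" using bk by (metis image_eqI)
    qed
  qed
  moreover have "inj_on (map \<phi>) (Fib Q L E)"
  proof (rule inj_onI)
    fix xs ys assume "xs \<in> Fib Q L E" "ys \<in> Fib Q L E" "map \<phi> xs = map \<phi> ys"
    then show "xs = ys" using inj_on_map_eq_map[OF inj_on_subset[OF inj, of "set xs \<union> set ys"]] sub by blast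
  qed
  ultimately show ?thesis by (simp add: card_image)
qed

lemma fiber_count:
  assumes fin: "finite A" and AQ: "\<And>vs. vs \<in> A \<Longrightarrow> Q vs"
    and closed: "\<And>vs ws. Q vs \<Longrightarrow> ws \<in> A \<Longrightarrow> walk_edges L vs = walk_edges L ws \<Longrightarrow> vs \<in> A"
    and const: "\<And>ws. ws \<in> A \<Longrightarrow> card (Fib Q L (walk_edges L ws)) = c"
  shows "card A = card (walk_edges L ` A) * c"
proof -
  have "card A = (\<Sum>x\<in>A. 1::nat)" by simp
  also have "\<dots> = (\<Sum>E\<in>walk_edges L ` A. \<Sum>x\<in>{x\<in>A. walk_edges L x = E}. 1)"
    using sum.group[of A "walk_edges L ` A" "walk_edges L" "\<lambda>_. 1::nat"] fin by simp
  also have "\<dots> = (\<Sum>E\<in>walk_edges L ` A. c)"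
  proof (rule sum.cong)
    fix E assume "E \<in> walk_edges L ` A"
    then obtain ws where ws: "ws \<in> A" "E = walk_edges L ws" by auto
    have "{x\<in>A. walk_edges L x = E} = Fib Q L E"
      using ws AQ closed unfolding Fib_def by blast
    then show "(\<Sum>x\<in>{x\<in>A. walk_edges L x = E}. 1) = c" using const[OF ws(1)] ws(2) by simp
  qed simp
  also have "\<dots> = card (walk_edges L ` A) * c" by simp
  finally show ?thesis .
qed

definition Qc :: "nat \<Rightarrow> nat list \<Rightarrow> bool" where
  "Qc L vs \<longleftrightarrow> length vs = Suc L \<and> distinct (take L vs) \<and> vs ! L = vs ! 0"

definition Qp :: "nat \<Rightarrow> nat list \<Rightarrow> bool" where
  "Qp L vs \<longleftrightarrow> length vs = Suc L \<and> distinct vs"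

definition stdC :: "nat \<Rightarrow> nat list" where "stdC L = map (\<lambda>k. k mod L) [0..<Suc L]"
definition stdP :: "nat \<Rightarrow> nat list" where "stdP L = [0..<Suc L]"

lemma Qc_map: "Qc L vs \<Longrightarrow> inj_on \<phi> (set vs) \<Longrightarrow> Qc L (map \<phi> vs)"
  unfolding Qc_def by (auto simp: take_map intro!: distinct_map[THEN iffD2] inj_on_subset[OF _ set_take_subset])

lemma Qp_map: "Qp L vs \<Longrightarrow> inj_on \<phi> (set vs) \<Longrightarrow> Qp L (map \<phi> vs)"
  unfolding Qp_def by (auto simp: distinct_map)

lemma Qc_std:
  assumes "Qc L ws" "1 \<le> L"
  shows "walk_edges L ws = (`) (\<lambda>k. ws ! k) ` walk_edges L (stdC L)"
    and "inj_on (\<lambda>k. ws ! k) (\<Union> (walk_edges L (stdC L)))"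
proof -
  have len: "length ws = Suc L" and last: "ws ! L = ws ! 0" and dist: "distinct (take L ws)"
    using assms unfolding Qc_def by auto
  have "ws ! (Suc k mod L) = ws ! Suc k" if "k < L" for k
    using that last by (cases "Suc k = L") auto
  then show "walk_edges L ws = (`) (\<lambda>k. ws ! k) ` walk_edges L (stdC L)"
    unfolding we_image image_image stdC_def
    by (intro image_cong) (auto simp: nth_Cons' simp del: upt_Suc)
  have sub: "\<Union> (walk_edges L (stdC L)) \<subseteq> {..<L}"
    unfolding we_image stdC_def using assms(2) by (auto simp del: upt_Suc)
  have "inj_on (\<lambda>k. ws ! k) {..<L}"
  proof (rule inj_onI)
    fix a b assume "a \<in> {..<L}" "b \<in> {..<L}" "ws ! a = ws ! b"
    then have "take L ws ! a = take L ws ! b" by simp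
    moreover have lt: "a < length (take L ws)" "b < length (take L ws)"
      using len \<open>a \<in> {..<L}\<close> \<open>b \<in> {..<L}\<close> by auto
    ultimately show "a = b" using nth_eq_iff_index_eq[OF dist lt] by blast
  qed
  then show "inj_on (\<lambda>k. ws ! k) (\<Union> (walk_edges L (stdC L)))" using inj_on_subset sub by blast
qed

lemma Qp_std:
  assumes "Qp L ws"
  shows "walk_edges L ws = (`) (\<lambda>k. ws ! k) ` walk_edges L (stdP L)"
    and "inj_on (\<lambda>k. ws ! k) (\<Union> (walk_edges L (stdP L)))"
proof -
  have len: "length ws = Suc L" and dist: "distinct ws"
    using assms unfolding Qp_def by auto
  show "walk_edges L ws = (`) (\<lambda>k. ws ! k) ` walk_edges L (stdP L)"
    unfolding we_image image_image stdP_def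
    by (intro image_cong) (auto simp del: upt_Suc)
  have sub: "\<Union> (walk_edges L (stdP L)) \<subseteq> {..<Suc L}"
    unfolding we_image stdP_def by (auto simp del: upt_Suc)
  have "inj_on (\<lambda>k. ws ! k) {..<Suc L}"
    using dist len by (auto intro!: inj_onI simp: nth_eq_iff_index_eq)
  then show "inj_on (\<lambda>k. ws ! k) (\<Union> (walk_edges L (stdP L)))" using inj_on_subset sub by blast
qed

lemma is_cycle_iff: "is_cycle G L vs \<longleftrightarrow> 3 \<le> L \<and> Qc L vs \<and> (\<forall>k<L. adj G (vs!k) (vs!Suc k))"
  unfolding is_cycle_def is_walk_def Qc_def by auto

lemma is_path_iff: "is_path G L vs \<longleftrightarrow> 1 \<le> L \<and> Qp L vs \<and> (\<forall>k<L. adj G (vs!k) (vs!Suc k))"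
  unfolding is_path_def is_walk_def Qp_def by auto

lemma adj_closed:
  assumes wf: "wf_graph G" and ws: "\<forall>k<L. adj G (ws!k) (ws!Suc k)"
    and eq: "walk_edges L vs = walk_edges L ws"
  shows "\<forall>k<L. adj G (vs!k) (vs!Suc k)"
proof (intro allI impI)
  fix k assume k: "k < L"
  have "{vs!k, vs!Suc k} \<in> walk_edges L ws" using eq k unfolding we_image by auto
  then obtain j where j: "j < L" "{vs!k, vs!Suc k} = {ws!j, ws!Suc j}" unfolding we_image by auto
  have a: "adj G (ws!j) (ws!Suc j)" using ws j by auto
  have "adj G (ws!Suc j) (ws!j)" using wfD[OF wf a] by simp
  then show "adj G (vs!k) (vs!Suc k)" using j(2) a by (auto simp: doubleton_eq_iff)
qed

lemma walk_verts:
  assumes wf: "wf_graph G" and "length vs = Suc L" "1 \<le> L" "\<forall>k<L. adj G (vs!k) (vs!Suc k)"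
  shows "set vs \<subseteq> verts G"
proof -
  have "\<Union> (walk_edges L vs) \<subseteq> verts G"
    using assms wfD[OF wf] unfolding we_image by auto
  then show ?thesis using set_sub_we[OF assms(2,3)] by blast
qed

lemma fin_walks:
  assumes wf: "wf_graph G" and L: "1 \<le> L"
  shows "finite {vs. length vs = Suc L \<and> (\<forall>k<L. adj G (vs!k) (vs!Suc k))}"
proof (rule finite_subset)
  show "{vs. length vs = Suc L \<and> (\<forall>k<L. adj G (vs!k) (vs!Suc k))} \<subseteq> {vs. set vs \<subseteq> verts G \<and> length vs = Suc L}"
    using walk_verts[OF wf _ L] by auto
  show "finite {vs. set vs \<subseteq> verts G \<and> length vs = Suc L}"
    using finite_lists_length_eq wf_fin[OF wf] by blast
qed

lemma cycles_card:
  assumes wf: "wf_graph G" and L: "3 \<le> L"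
  shows "card {vs. is_cycle G L vs} = count_cycles L G * card (Fib (Qc L) L (walk_edges L (stdC L)))"
  unfolding count_cycles_def
proof (rule fiber_count)
  show "finite {vs. is_cycle G L vs}"
    by (rule finite_subset[OF _ fin_walks[OF wf, of L]]) (use L in \<open>auto simp: is_cycle_iff Qc_def\<close>)
  show "\<And>vs. vs \<in> {vs. is_cycle G L vs} \<Longrightarrow> Qc L vs" by (simp add: is_cycle_iff)
  show "\<And>vs ws. Qc L vs \<Longrightarrow> ws \<in> {vs. is_cycle G L vs} \<Longrightarrow> walk_edges L vs = walk_edges L ws
      \<Longrightarrow> vs \<in> {vs. is_cycle G L vs}"
    using adj_closed[OF wf] by (auto simp: is_cycle_iff)
  fix ws assume "ws \<in> {vs. is_cycle G L vs}"
  then have Q: "Qc L ws" by (simp add: is_cycle_iff)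
  have L1: "1 \<le> L" using L by simp
  show "card (Fib (Qc L) L (walk_edges L ws)) = card (Fib (Qc L) L (walk_edges L (stdC L)))"
    unfolding Qc_std(1)[OF Q L1]
    by (rule relabel_card[where Q="Qc L", OF L1 _ Qc_map Qc_std(2)[OF Q L1]]) (simp add: Qc_def)
qed

lemma paths_card:
  assumes wf: "wf_graph G" and L: "1 \<le> L"
  shows "card {vs. is_path G L vs} = count_paths L G * card (Fib (Qp L) L (walk_edges L (stdP L)))"
  unfolding count_paths_def
proof (rule fiber_count)
  show "finite {vs. is_path G L vs}"
    by (rule finite_subset[OF _ fin_walks[OF wf L]]) (auto simp: is_path_iff Qp_def)
  show "\<And>vs. vs \<in> {vs. is_path G L vs} \<Longrightarrow> Qp L vs" by (simp add: is_path_iff)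
  show "\<And>vs ws. Qp L vs \<Longrightarrow> ws \<in> {vs. is_path G L vs} \<Longrightarrow> walk_edges L vs = walk_edges L ws
      \<Longrightarrow> vs \<in> {vs. is_path G L vs}"
    using adj_closed[OF wf] by (auto simp: is_path_iff)
  fix ws assume "ws \<in> {vs. is_path G L vs}"
  then have Q: "Qp L ws" by (simp add: is_path_iff)
  show "card (Fib (Qp L) L (walk_edges L ws)) = card (Fib (Qp L) L (walk_edges L (stdP L)))"
    unfolding Qp_std(1)[OF Q]
    by (rule relabel_card[where Q="Qp L", OF L _ Qp_map Qp_std(2)[OF Q]]) (simp add: Qp_def)
qed

fun chain :: "('a \<Rightarrow> 'a \<Rightarrow> bool) \<Rightarrow> 'a list \<Rightarrow> bool" where
  "chain r (x # y # zs) = (r x y \<and> chain r (y # zs))"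
| "chain r _ = True"

lemma chain_nth: "chain r xs \<longleftrightarrow> (\<forall>k. Suc k < length xs \<longrightarrow> r (xs!k) (xs!Suc k))"
proof (induction r xs rule: chain.induct)
  case (1 r x y zs)
  show ?case
  proof
    assume "chain r (x # y # zs)"
    then show "\<forall>k. Suc k < length (x # y # zs) \<longrightarrow> r ((x # y # zs) ! k) ((x # y # zs) ! Suc k)"
      using 1 by (auto simp: nth_Cons split: nat.splits)
  next
    assume H: "\<forall>k. Suc k < length (x # y # zs) \<longrightarrow> r ((x # y # zs) ! k) ((x # y # zs) ! Suc k)"
    have "r x y" using H[rule_format, of 0] by simp
    moreover have "chain r (y # zs)" using 1 H[rule_format, of "Suc k" for k] by auto
    ultimately show "chain r (x # y # zs)" by simp
  qed
qed auto

lemma is_walk_chain: "is_walk G L vs \<longleftrightarrow> length vs = Suc L \<and> chain (adj G) vs"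
  unfolding is_walk_def chain_nth by auto

lemma chain_append: "chain r (xs @ y # ys) \<longleftrightarrow> chain r (xs @ [y]) \<and> chain r (y # ys)"
proof (induction xs)
  case Nil
  then show ?case by simp
next
  case (Cons x xs)
  then show ?case by (cases xs) auto
qed

lemma chain_snoc: "q \<noteq> [] \<Longrightarrow> chain r (q @ [w]) \<longleftrightarrow> chain r q \<and> r (last q) w"
proof (induction q)
  case Nil
  then show ?case by simp
next
  case (Cons x xs)
  then show ?case by (cases xs) auto
qed

lemma chain_map: "(\<And>x y. x \<in> set xs \<Longrightarrow> y \<in> set xs \<Longrightarrow> r x y \<Longrightarrow> r' (f x) (f y)) \<Longrightarrow> chain r xs \<Longrightarrow> chain r' (map f xs)"
  by (induction r xs rule: chain.induct) auto

fun cnt :: "nat list list \<Rightarrow> (nat list \<Rightarrow> bool) \<Rightarrow> nat \<Rightarrow> nat list \<Rightarrow> nat"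
and cntl :: "nat list list \<Rightarrow> (nat list \<Rightarrow> bool) \<Rightarrow> nat \<Rightarrow> nat list \<Rightarrow> nat list \<Rightarrow> nat" where
  "cnt nb chk 0 q = (if chk q then 1 else 0)"
| "cnt nb chk (Suc m) q = cntl nb chk m q (nb ! last q)"
| "cntl nb chk m q [] = 0"
| "cntl nb chk m q (w#ws) = (if w \<in> set q then 0 else cnt nb chk m (q@[w])) + cntl nb chk m q ws"

lemma cntl_eq: "cntl nb chk m q ws = sum_list (map (\<lambda>w. cnt nb chk m (q@[w])) (filter (\<lambda>w. w \<notin> set q) ws))"
  by (induction ws) auto

definition PE :: "(nat \<Rightarrow> nat \<Rightarrow> bool) \<Rightarrow> nat set \<Rightarrow> (nat list \<Rightarrow> bool) \<Rightarrow> nat \<Rightarrow> nat list \<Rightarrow> nat list set" where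
  "PE r U chk m q = {ws. length ws = m \<and> set ws \<subseteq> U \<and> distinct (q @ ws) \<and> chain r (q @ ws) \<and> chk (q @ ws)}"

lemma PE_finite: "finite U \<Longrightarrow> finite (PE r U chk m q)"
  by (rule finite_subset[of _ "{ws. set ws \<subseteq> U \<and> length ws = m}"]) (auto simp: PE_def finite_lists_length_eq)

lemma cnt_correct:
  assumes U: "finite U"
    and nbok: "\<And>u. u \<in> U \<Longrightarrow> distinct (nb ! u) \<and> set (nb ! u) = {w. r u w} \<and> set (nb ! u) \<subseteq> U"
  shows "q \<noteq> [] \<Longrightarrow> last q \<in> U \<Longrightarrow> distinct q \<Longrightarrow> chain r q \<Longrightarrow> card (PE r U chk m q) = cnt nb chk m q"
proof (induction m arbitrary: q)
  case 0
  have "PE r U chk 0 q = (if chk q then {[]} else {})" using 0 by (auto simp: PE_def)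
  then show ?case by simp
next
  case (Suc m)
  let ?W = "{w \<in> set (nb ! last q). w \<notin> set q}"
  have eq: "PE r U chk (Suc m) q = (\<Union>w\<in>?W. (#) w ` PE r U chk m (q @ [w]))"
  proof
    show "PE r U chk (Suc m) q \<subseteq> (\<Union>w\<in>?W. (#) w ` PE r U chk m (q @ [w]))"
    proof
      fix xs assume xs: "xs \<in> PE r U chk (Suc m) q"
      then obtain w ws where xw: "xs = w # ws" by (cases xs) (auto simp: PE_def)
      have ch: "chain r (q @ [w])" using xs xw chain_append[of r q w ws] by (auto simp: PE_def)
      then have "r (last q) w" using chain_snoc[OF Suc.prems(1)] by simp
      then have "w \<in> ?W" using nbok[OF Suc.prems(2)] xs xw by (auto simp: PE_def)
      moreover have "ws \<in> PE r U chk m (q @ [w])" using xs xw by (auto simp: PE_def)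
      ultimately show "xs \<in> (\<Union>w\<in>?W. (#) w ` PE r U chk m (q @ [w]))" using xw by blast
    qed
  next
    show "(\<Union>w\<in>?W. (#) w ` PE r U chk m (q @ [w])) \<subseteq> PE r U chk (Suc m) q"
    proof
      fix xs assume "xs \<in> (\<Union>w\<in>?W. (#) w ` PE r U chk m (q @ [w]))"
      then obtain w ws where w: "w \<in> ?W" and ws: "ws \<in> PE r U chk m (q @ [w])" and xw: "xs = w # ws" by auto
      have "w \<in> U" using w nbok[OF Suc.prems(2)] by auto
      then show "xs \<in> PE r U chk (Suc m) q" using ws xw by (auto simp: PE_def)
    qed
  qed
  have fin: "finite ?W" by simp
  have "card (PE r U chk (Suc m) q) = (\<Sum>w\<in>?W. card ((#) w ` PE r U chk m (q @ [w])))"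
    unfolding eq by (rule card_UN_disjoint) (auto simp: PE_finite[OF U])
  also have "\<dots> = (\<Sum>w\<in>?W. cnt nb chk m (q @ [w]))"
  proof (rule sum.cong)
    fix w assume w: "w \<in> ?W"
    have wU: "w \<in> U" and rw: "r (last q) w" using w nbok[OF Suc.prems(2)] by auto
    have "card ((#) w ` PE r U chk m (q @ [w])) = card (PE r U chk m (q @ [w]))"
      by (rule card_image) (auto simp: inj_on_def)
    also have "\<dots> = cnt nb chk m (q @ [w])"
      using Suc.IH[of "q @ [w]"] wU w rw Suc.prems chain_snoc[OF Suc.prems(1)] by auto
    finally show "card ((#) w ` PE r U chk m (q @ [w])) = cnt nb chk m (q @ [w])" .
  qed simp
  also have "\<dots> = sum_list (map (\<lambda>w. cnt nb chk m (q@[w])) (filter (\<lambda>w. w \<notin> set q) (nb ! last q)))"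
  proof -
    have "distinct (filter (\<lambda>w. w \<notin> set q) (nb ! last q))" using nbok[OF Suc.prems(2)] by simp
    then show ?thesis by (simp add: sum_list_distinct_conv_sum_set)
  qed
  also have "\<dots> = cnt nb chk (Suc m) q" by (simp add: cntl_eq)
  finally show ?case .
qed

definition aut :: "graph \<Rightarrow> (nat \<Rightarrow> nat) \<Rightarrow> bool" where
  "aut G \<sigma> \<longleftrightarrow> bij_betw \<sigma> (verts G) (verts G) \<and> (\<forall>u\<in>verts G. \<forall>v\<in>verts G. adj G u v \<longleftrightarrow> adj G (\<sigma> u) (\<sigma> v))"

definition WQ :: "graph \<Rightarrow> (nat list \<Rightarrow> bool) \<Rightarrow> nat \<Rightarrow> nat \<Rightarrow> nat \<Rightarrow> nat list set" where
  "WQ G Q L a b = {vs. Q vs \<and> length vs = Suc L \<and> chain (adj G) vs \<and> vs!0 = a \<and> vs!1 = b}"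

definition WA :: "graph \<Rightarrow> (nat list \<Rightarrow> bool) \<Rightarrow> nat \<Rightarrow> nat list set" where
  "WA G Q L = {vs. Q vs \<and> length vs = Suc L \<and> chain (adj G) vs}"

lemma aut_comp: assumes "aut G \<sigma>" "aut G \<tau>" shows "aut G (\<sigma> \<circ> \<tau>)"
proof -
  have bs: "bij_betw \<sigma> (verts G) (verts G)" and as: "\<forall>u\<in>verts G. \<forall>v\<in>verts G. adj G u v \<longleftrightarrow> adj G (\<sigma> u) (\<sigma> v)"
    and bt: "bij_betw \<tau> (verts G) (verts G)" and at: "\<forall>u\<in>verts G. \<forall>v\<in>verts G. adj G u v \<longleftrightarrow> adj G (\<tau> u) (\<tau> v)"
    using assms unfolding aut_def by auto
  have "adj G u v \<longleftrightarrow> adj G (\<sigma> (\<tau> u)) (\<sigma> (\<tau> v))" if "u \<in> verts G" "v \<in> verts G" for u v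
  proof -
    have "\<tau> u \<in> verts G" "\<tau> v \<in> verts G" using bij_betw_apply[OF bt] that by auto
    then show ?thesis using as at that by blast
  qed
  then show ?thesis unfolding aut_def using bij_betw_trans[OF bt bs] by auto
qed

lemma aut_inv: assumes "aut G \<sigma>" shows "aut G (inv_into (verts G) \<sigma>)"
proof -
  have b: "bij_betw \<sigma> (verts G) (verts G)" and a: "\<forall>u\<in>verts G. \<forall>v\<in>verts G. adj G u v \<longleftrightarrow> adj G (\<sigma> u) (\<sigma> v)"
    using assms unfolding aut_def by auto
  have bi: "bij_betw (inv_into (verts G) \<sigma>) (verts G) (verts G)" using bij_betw_inv_into[OF b] .
  have "adj G u v \<longleftrightarrow> adj G (inv_into (verts G) \<sigma> u) (inv_into (verts G) \<sigma> v)"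
    if "u \<in> verts G" "v \<in> verts G" for u v
  proof -
    have iu: "inv_into (verts G) \<sigma> u \<in> verts G" "inv_into (verts G) \<sigma> v \<in> verts G"
      using bij_betw_apply[OF bi] that by auto
    have "\<sigma> (inv_into (verts G) \<sigma> u) = u" "\<sigma> (inv_into (verts G) \<sigma> v) = v"
      using that b by (auto simp: bij_betw_def f_inv_into_f)
    then show ?thesis using a iu by metis
  qed
  then show ?thesis using bi unfolding aut_def by auto
qed

lemma fin_chain_walks: "wf_graph G \<Longrightarrow> 1 \<le> L \<Longrightarrow> finite {vs. length vs = Suc L \<and> chain (adj G) vs}"
proof -
  assume "wf_graph G" "1 \<le> L"
  moreover have "{vs. length vs = Suc L \<and> chain (adj G) vs} = {vs. length vs = Suc L \<and> (\<forall>k<L. adj G (vs!k) (vs!Suc k))}"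
    unfolding chain_nth by auto
  ultimately show ?thesis using fin_walks[of G L] by simp
qed

lemma chain_verts: "wf_graph G \<Longrightarrow> 1 \<le> L \<Longrightarrow> length vs = Suc L \<Longrightarrow> chain (adj G) vs \<Longrightarrow> set vs \<subseteq> verts G"
  by (rule walk_verts) (auto simp: chain_nth)

lemma aut_le:
  assumes wf: "wf_graph G" and au: "aut G \<sigma>" and L: "1 \<le> L"
    and Qmap: "\<And>vs \<phi>. Q vs \<Longrightarrow> inj_on \<phi> (set vs) \<Longrightarrow> Q (map \<phi> vs)"
  shows "card (WQ G Q L a b) \<le> card (WQ G Q L (\<sigma> a) (\<sigma> b))"
proof (rule card_inj_on_le)
  have b: "bij_betw \<sigma> (verts G) (verts G)" and ad: "\<forall>u\<in>verts G. \<forall>v\<in>verts G. adj G u v \<longleftrightarrow> adj G (\<sigma> u) (\<sigma> v)"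
    using au unfolding aut_def by auto
  have inj: "inj_on \<sigma> (verts G)" using b by (simp add: bij_betw_def)
  have sv: "set vs \<subseteq> verts G" if "vs \<in> WQ G Q L a b" for vs
    using chain_verts[OF wf L] that by (auto simp: WQ_def)
  show "inj_on (map \<sigma>) (WQ G Q L a b)"
  proof (rule inj_onI)
    fix xs ys assume "xs \<in> WQ G Q L a b" "ys \<in> WQ G Q L a b" "map \<sigma> xs = map \<sigma> ys"
    then show "xs = ys" using inj_on_map_eq_map[OF inj_on_subset[OF inj, of "set xs \<union> set ys"]] sv by blast
  qed
  show "map \<sigma> ` WQ G Q L a b \<subseteq> WQ G Q L (\<sigma> a) (\<sigma> b)"
  proof
    fix ys assume "ys \<in> map \<sigma> ` WQ G Q L a b"
    then obtain vs where vs: "vs \<in> WQ G Q L a b" "ys = map \<sigma> vs" by auto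
    have s: "set vs \<subseteq> verts G" using sv[OF vs(1)] .
    have "Q ys" using Qmap[of vs \<sigma>] vs inj_on_subset[OF inj s] by (auto simp: WQ_def)
    moreover have "chain (adj G) ys"
    proof -
      have "chain (adj G) vs" using vs by (simp add: WQ_def)
      moreover have "\<And>x y. x \<in> set vs \<Longrightarrow> y \<in> set vs \<Longrightarrow> adj G x y \<Longrightarrow> adj G (\<sigma> x) (\<sigma> y)"
        using s ad by blast
      ultimately show ?thesis using chain_map[of vs "adj G" "adj G" \<sigma>] vs(2) by blast
    qed
    moreover have "length vs = Suc L" using vs by (simp add: WQ_def)
    ultimately show "ys \<in> WQ G Q L (\<sigma> a) (\<sigma> b)" using vs L by (auto simp: WQ_def)
  qed
  show "finite (WQ G Q L (\<sigma> a) (\<sigma> b))"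
    by (rule finite_subset[OF _ fin_chain_walks[OF wf L]]) (auto simp: WQ_def)
qed

lemma aut_eq:
  assumes wf: "wf_graph G" and au: "aut G \<sigma>" and L: "1 \<le> L"
    and Qmap: "\<And>vs \<phi>. Q vs \<Longrightarrow> inj_on \<phi> (set vs) \<Longrightarrow> Q (map \<phi> vs)"
    and ab: "a \<in> verts G" "b \<in> verts G"
  shows "card (WQ G Q L (\<sigma> a) (\<sigma> b)) = card (WQ G Q L a b)"
proof (rule antisym)
  let ?i = "inv_into (verts G) \<sigma>"
  have inj: "inj_on \<sigma> (verts G)" using au unfolding aut_def bij_betw_def by auto
  have "card (WQ G Q L (\<sigma> a) (\<sigma> b)) \<le> card (WQ G Q L (?i (\<sigma> a)) (?i (\<sigma> b)))"
    by (rule aut_le[where Q=Q, OF wf aut_inv[OF au] L Qmap])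
  also have "\<dots> = card (WQ G Q L a b)" using inv_into_f_f[OF inj] ab by simp
  finally show "card (WQ G Q L (\<sigma> a) (\<sigma> b)) \<le> card (WQ G Q L a b)" .
  show "card (WQ G Q L a b) \<le> card (WQ G Q L (\<sigma> a) (\<sigma> b))" by (rule aut_le[where Q=Q, OF wf au L Qmap])
qed

lemma arcs_sum:
  assumes wf: "wf_graph G" and L: "1 \<le> L"
  shows "card (WA G Q L) = (\<Sum>ab\<in>Sigma (verts G) (\<lambda>a. {b\<in>verts G. adj G a b}). card (WQ G Q L (fst ab) (snd ab)))"
proof -
  let ?g = "\<lambda>vs. (vs!0, vs!1)"
  let ?S = "Sigma (verts G) (\<lambda>a. {b\<in>verts G. adj G a b})"
  have fin: "finite (WA G Q L)"
    by (rule finite_subset[OF _ fin_chain_walks[OF wf L]]) (auto simp: WA_def)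
  have finS: "finite ?S" using wf_fin[OF wf] by auto
  have img: "?g ` WA G Q L \<subseteq> ?S"
  proof
    fix x assume "x \<in> ?g ` WA G Q L"
    then obtain vs where vs: "vs \<in> WA G Q L" "x = ?g vs" by auto
    have "adj G (vs!0) (vs!1)" using vs L unfolding WA_def chain_nth by auto
    then show "x \<in> ?S" using vs wfD[OF wf] by auto
  qed
  have "card (WA G Q L) = (\<Sum>x\<in>WA G Q L. 1::nat)" by simp
  also have "\<dots> = (\<Sum>ab\<in>?S. \<Sum>x\<in>{x\<in>WA G Q L. ?g x = ab}. 1)"
    using sum.group[OF fin finS img, of "\<lambda>_. 1::nat"] by simp
  also have "\<dots> = (\<Sum>ab\<in>?S. card (WQ G Q L (fst ab) (snd ab)))"
  proof (rule sum.cong)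
    fix ab assume "ab \<in> ?S"
    have "{x\<in>WA G Q L. ?g x = ab} = WQ G Q L (fst ab) (snd ab)"
      by (cases ab) (auto simp: WA_def WQ_def)
    then show "(\<Sum>x\<in>{x\<in>WA G Q L. ?g x = ab}. 1) = card (WQ G Q L (fst ab) (snd ab))" by simp
  qed simp
  finally show ?thesis .
qed

lemma arc_trans:
  assumes wf: "wf_graph G" and a0: "a0 \<in> verts G"
    and tr: "\<And>a. a \<in> verts G \<Longrightarrow> \<exists>\<tau>. aut G \<tau> \<and> \<tau> a0 = a"
    and st: "\<And>c. adj G a0 c \<Longrightarrow> \<exists>\<rho>. aut G \<rho> \<and> \<rho> a0 = a0 \<and> \<rho> b0 = c"
    and ab: "a \<in> verts G" "adj G a b"
  shows "\<exists>\<sigma>. aut G \<sigma> \<and> \<sigma> a0 = a \<and> \<sigma> b0 = b"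
proof -
  obtain \<tau> where t: "aut G \<tau>" "\<tau> a0 = a" using tr[OF ab(1)] by blast
  have bj: "bij_betw \<tau> (verts G) (verts G)" and ad: "\<forall>u\<in>verts G. \<forall>v\<in>verts G. adj G u v \<longleftrightarrow> adj G (\<tau> u) (\<tau> v)"
    using t(1) unfolding aut_def by auto
  have bV: "b \<in> verts G" using wfD[OF wf ab(2)] by simp
  obtain c where c: "c \<in> verts G" "\<tau> c = b" using bj bV by (metis bij_betw_iff_bijections)
  have "adj G a0 c" using ad a0 c t(2) ab(2) by metis
  then obtain \<rho> where r: "aut G \<rho>" "\<rho> a0 = a0" "\<rho> b0 = c" using st by blast
  show ?thesis using aut_comp[OF t(1) r(1)] t(2) r c by auto
qed

lemma vt_count:
  assumes wf: "wf_graph G" and L: "1 \<le> L"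
    and Qmap: "\<And>vs \<phi>. Q vs \<Longrightarrow> inj_on \<phi> (set vs) \<Longrightarrow> Q (map \<phi> vs)"
    and a0: "a0 \<in> verts G" and b0: "b0 \<in> verts G"
    and tr: "\<And>a. a \<in> verts G \<Longrightarrow> \<exists>\<tau>. aut G \<tau> \<and> \<tau> a0 = a"
    and st: "\<And>c. adj G a0 c \<Longrightarrow> \<exists>\<rho>. aut G \<rho> \<and> \<rho> a0 = a0 \<and> \<rho> b0 = c"
  shows "card (WA G Q L) = card (Sigma (verts G) (\<lambda>a. {b\<in>verts G. adj G a b})) * card (WQ G Q L a0 b0)"
proof -
  have "card (WA G Q L) = (\<Sum>ab\<in>Sigma (verts G) (\<lambda>a. {b\<in>verts G. adj G a b}). card (WQ G Q L a0 b0))"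
    unfolding arcs_sum[OF wf L]
  proof (rule sum.cong)
    fix ab assume "ab \<in> Sigma (verts G) (\<lambda>a. {b\<in>verts G. adj G a b})"
    then obtain \<sigma> where s: "aut G \<sigma>" "\<sigma> a0 = fst ab" "\<sigma> b0 = snd ab"
      using arc_trans[OF wf a0 tr st, of "fst ab" "snd ab"] by auto
    show "card (WQ G Q L (fst ab) (snd ab)) = card (WQ G Q L a0 b0)"
      using aut_eq[where Q=Q, OF wf s(1) L Qmap a0 b0] s by simp
  qed simp
  then show ?thesis by simp
qed

lemma l16: "{..<16::nat} = set [0,1,2,3,4,5,6,7,8,9,10,11,12,13,14,15]"
  by (simp add: lessThan_nat_numeral lessThan_Suc insert_commute)
lemma all16: "(\<forall>u<(16::nat). P u) \<longleftrightarrow> (\<forall>u\<in>set [0,1,2,3,4,5,6,7,8,9,10,11,12,13,14,15]. P u)"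
  unfolding l16[symmetric] by auto
lemma l6: "{..<6::nat} = set [0,1,2,3,4,5]"
  by (simp add: lessThan_nat_numeral lessThan_Suc insert_commute)
lemma all6: "(\<forall>u<(6::nat). P u) \<longleftrightarrow> (\<forall>u\<in>set [0,1,2,3,4,5]. P u)"
  unfolding l6[symmetric] by auto

definition mkG :: "nat list list \<Rightarrow> graph" where
  "mkG nb = \<lparr>verts = {..<16}, adj = (\<lambda>u v. u < 16 \<and> v \<in> set (nb ! u)), nattr = (\<lambda>_. []), eattr = (\<lambda>_ _. [])\<rparr>"

definition tblok :: "nat list list \<Rightarrow> bool" where
  "tblok nb \<longleftrightarrow> (\<forall>u<16. distinct (nb!u) \<and> set (nb!u) \<subseteq> {..<16} \<and> u \<notin> set (nb!u) \<and> length (nb!u) = 6 \<and>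
     sorted (nb!u) \<and> (\<forall>v\<in>set (nb!u). u \<in> set (nb!v)) \<and>
     (\<forall>v<16. v \<noteq> u \<longrightarrow> length (filter (\<lambda>x. x \<in> set (nb!v)) (nb!u)) = 2))"

definition autchk :: "nat list list \<Rightarrow> nat list \<Rightarrow> bool" where
  "autchk nb p \<longleftrightarrow> length p = 16 \<and> distinct p \<and> set p \<subseteq> {..<16} \<and>
     (\<forall>u<16. sort (map (\<lambda>v. p ! v) (nb ! u)) = nb ! (p ! u))"

lemma tblokD:
  assumes "tblok nb" "u < 16"
  shows "distinct (nb!u)" "set (nb!u) \<subseteq> {..<16}" "u \<notin> set (nb!u)" "length (nb!u) = 6" "sorted (nb!u)"
    "\<And>v. v \<in> set (nb!u) \<Longrightarrow> u \<in> set (nb!v)"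
    "\<And>v. v < 16 \<Longrightarrow> v \<noteq> u \<Longrightarrow> length (filter (\<lambda>x. x \<in> set (nb!v)) (nb!u)) = 2"
proof -
  have H: "distinct (nb!u) \<and> set (nb!u) \<subseteq> {..<16} \<and> u \<notin> set (nb!u) \<and> length (nb!u) = 6 \<and>
     sorted (nb!u) \<and> (\<forall>v\<in>set (nb!u). u \<in> set (nb!v)) \<and>
     (\<forall>v<16. v \<noteq> u \<longrightarrow> length (filter (\<lambda>x. x \<in> set (nb!v)) (nb!u)) = 2)"
    using assms unfolding tblok_def by blast
  show "distinct (nb!u)" "set (nb!u) \<subseteq> {..<16}" "u \<notin> set (nb!u)" "length (nb!u) = 6" "sorted (nb!u)"
    using H by blast+
  show "\<And>v. v \<in> set (nb!u) \<Longrightarrow> u \<in> set (nb!v)" using H by blast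
  show "\<And>v. v < 16 \<Longrightarrow> v \<noteq> u \<Longrightarrow> length (filter (\<lambda>x. x \<in> set (nb!v)) (nb!u)) = 2" using H by blast
qed

lemma mkG_wf: assumes T: "tblok nb" shows "wf_graph (mkG nb)"
proof -
  have fin: "finite (verts (mkG nb))" by (simp add: mkG_def)
  have "adj (mkG nb) u v \<longrightarrow> u \<in> verts (mkG nb) \<and> v \<in> verts (mkG nb) \<and> u \<noteq> v \<and> adj (mkG nb) v u
      \<and> eattr (mkG nb) u v = eattr (mkG nb) v u" for u v
  proof
    assume "adj (mkG nb) u v"
    then have u: "u < 16" and uv: "v \<in> set (nb ! u)" by (simp_all add: mkG_def)
    have v: "v < 16" using tblokD(2)[OF T u] uv by auto
    have ne: "u \<noteq> v" using tblokD(3)[OF T u] uv by auto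
    have vu: "u \<in> set (nb ! v)" using tblokD(6)[OF T u uv] .
    show "u \<in> verts (mkG nb) \<and> v \<in> verts (mkG nb) \<and> u \<noteq> v \<and> adj (mkG nb) v u
      \<and> eattr (mkG nb) u v = eattr (mkG nb) v u"
      using u v ne vu by (simp add: mkG_def)
  qed
  then show ?thesis unfolding wf_graph_def using fin by blast
qed

lemma mkG_srg: assumes T: "tblok nb" shows "srg (mkG nb) 16 6 2 2"
proof -
  have k: "card {x\<in>verts (mkG nb). adj (mkG nb) i x} = 6" if "i \<in> verts (mkG nb)" for i
  proof -
    have i: "i < 16" using that by (simp add: mkG_def)
    have "{x\<in>verts (mkG nb). adj (mkG nb) i x} = set (nb ! i)" using tblokD(2)[OF T i] i by (auto simp: mkG_def)
    then show ?thesis using tblokD(1,4)[OF T i] by (simp add: distinct_card)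
  qed
  have c: "card {x\<in>verts (mkG nb). adj (mkG nb) i x \<and> adj (mkG nb) j x} = 2"
    if "i \<in> verts (mkG nb)" "j \<in> verts (mkG nb)" "i \<noteq> j" for i j
  proof -
    have i: "i < 16" and j: "j < 16" using that by (auto simp: mkG_def)
    have "{x\<in>verts (mkG nb). adj (mkG nb) i x \<and> adj (mkG nb) j x} = set (filter (\<lambda>x. x \<in> set (nb!j)) (nb!i))"
      using tblokD(2)[OF T i] i j by (auto simp: mkG_def)
    moreover have "card (set (filter (\<lambda>x. x \<in> set (nb!j)) (nb!i))) = length (filter (\<lambda>x. x \<in> set (nb!j)) (nb!i))"
      using tblokD(1)[OF T i] by (intro distinct_card) simp
    ultimately show ?thesis using tblokD(7)[OF T i j] that by simp
  qed
  have v: "verts (mkG nb) = {..<16}" "nattr (mkG nb) = (\<lambda>_. [])" "\<And>u v. eattr (mkG nb) u v = []"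
    by (simp_all add: mkG_def)
  show ?thesis unfolding srg_def
    using mkG_wf[OF T] k c v by simp
qed

lemma autchk_aut:
  assumes T: "tblok nb" and A: "autchk nb p"
  shows "aut (mkG nb) (\<lambda>v. p ! v)"
proof -
  have len: "length p = 16" and dp: "distinct p" and sp: "set p \<subseteq> {..<16}"
    and rows: "\<And>u. u < 16 \<Longrightarrow> sort (map (\<lambda>v. p ! v) (nb ! u)) = nb ! (p ! u)"
    using A unfolding autchk_def by auto
  have inj: "inj_on (\<lambda>v. p ! v) {..<16}"
  proof (rule inj_onI)
    fix a b assume "a \<in> {..<16::nat}" "b \<in> {..<16::nat}" "p ! a = p ! b"
    then show "a = b" using nth_eq_iff_index_eq[OF dp, of a b] len by simp
  qed
  have "set p = set (map (\<lambda>v. p ! v) [0..<length p])" by (simp add: map_nth)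
  then have img: "(\<lambda>v. p ! v) ` {..<16} = set p" using len by (simp add: lessThan_atLeast0)
  have "card (set p) = 16" using dp len by (simp add: distinct_card)
  then have "set p = {..<16}" using sp by (simp add: card_subset_eq)
  then have bij: "bij_betw (\<lambda>v. p ! v) {..<16} {..<16}" using inj img by (simp add: bij_betw_def)
  have ad: "v \<in> set (nb ! u) \<longleftrightarrow> p ! v \<in> set (nb ! (p ! u))" if "u < 16" "v < 16" for u v
  proof -
    have "set (nb ! (p ! u)) = set (sort (map (\<lambda>v. p ! v) (nb ! u)))" by (simp only: rows[OF that(1)])
    then have e: "set (nb ! (p ! u)) = (\<lambda>v. p ! v) ` set (nb ! u)" by simp
    have "set (nb ! u) \<subseteq> {..<16}" using tblokD(2)[OF T that(1)] .
    then show ?thesis unfolding e using inj_on_image_mem_iff[OF inj] that(2) by simp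
  qed
  have pu: "p ! u < 16" if "u < 16" for u
  proof -
    have "p ! u \<in> set p" using that len by simp
    then show ?thesis using sp by auto
  qed
  have "\<forall>u\<in>verts (mkG nb). \<forall>v\<in>verts (mkG nb). adj (mkG nb) u v \<longleftrightarrow> adj (mkG nb) (p ! u) (p ! v)"
  proof (intro ballI)
    fix u v assume "u \<in> verts (mkG nb)" "v \<in> verts (mkG nb)"
    then have uv: "u < 16" "v < 16" by (simp_all add: mkG_def)
    show "adj (mkG nb) u v \<longleftrightarrow> adj (mkG nb) (p ! u) (p ! v)"
      using ad[OF uv] pu[OF uv(1)] uv by (simp add: mkG_def)
  qed
  moreover have "verts (mkG nb) = {..<16}" by (simp add: mkG_def)
  ultimately show ?thesis unfolding aut_def using bij by simp
qed

lemma trans_st: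
  assumes T: "tblok nb"
    and tr: "\<forall>a<16. autchk nb (tr ! a) \<and> tr ! a ! 0 = a"
    and st: "\<forall>j<6. autchk nb (st ! j) \<and> st ! j ! 0 = 0 \<and> st ! j ! 1 = nb ! 0 ! j"
  shows "\<And>a. a \<in> verts (mkG nb) \<Longrightarrow> \<exists>\<tau>. aut (mkG nb) \<tau> \<and> \<tau> 0 = a"
    and "\<And>c. adj (mkG nb) 0 c \<Longrightarrow> \<exists>\<rho>. aut (mkG nb) \<rho> \<and> \<rho> 0 = 0 \<and> \<rho> 1 = c"
proof -
  fix a assume "a \<in> verts (mkG nb)"
  then have a: "a < 16" by (simp add: mkG_def)
  show "\<exists>\<tau>. aut (mkG nb) \<tau> \<and> \<tau> 0 = a"
    using autchk_aut[OF T] tr a by blast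
next
  fix c assume "adj (mkG nb) 0 c"
  then have "c \<in> set (nb ! 0)" by (simp add: mkG_def)
  then obtain j where j: "j < length (nb ! 0)" "c = nb ! 0 ! j" by (auto simp: in_set_conv_nth)
  have "j < 6" using j tblokD(4)[OF T, of 0] by simp
  then show "\<exists>\<rho>. aut (mkG nb) \<rho> \<and> \<rho> 0 = 0 \<and> \<rho> 1 = c"
    using autchk_aut[OF T] st j by blast
qed

lemma len9: "length vs = 9 \<Longrightarrow> \<exists>a b c d e f g h i. vs = [a,b,c,d,e,f,g,h,i]"
  by (simp add: numeral_eq_Suc length_Suc_conv) blast
lemma len7: "length vs = 7 \<Longrightarrow> \<exists>c d e f g h i. vs = [c,d,e,f,g,h,i]"
  by (simp add: numeral_eq_Suc length_Suc_conv) blast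
lemma len6: "length vs = 6 \<Longrightarrow> \<exists>c d e f g h. vs = [c,d,e,f,g,h]"
  by (simp add: numeral_eq_Suc length_Suc_conv) blast

lemma card_sigma96:
  assumes T: "tblok nb"
  shows "card (Sigma (verts (mkG nb)) (\<lambda>a. {b\<in>verts (mkG nb). adj (mkG nb) a b})) = 96"
proof -
  have "card {b\<in>verts (mkG nb). adj (mkG nb) a b} = 6" if "a \<in> verts (mkG nb)" for a
  proof -
    have a: "a < 16" using that by (simp add: mkG_def)
    have "{b\<in>verts (mkG nb). adj (mkG nb) a b} = set (nb ! a)" using tblokD(2)[OF T a] a by (auto simp: mkG_def)
    then show ?thesis using tblokD(1,4)[OF T a] by (simp add: distinct_card)
  qed
  moreover have "finite (verts (mkG nb))" by (simp add: mkG_def)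
  ultimately have "card (Sigma (verts (mkG nb)) (\<lambda>a. {b\<in>verts (mkG nb). adj (mkG nb) a b})) = (\<Sum>a\<in>verts (mkG nb). 6)"
    by (simp add: card_SigmaI)
  also have "\<dots> = 96" by (simp add: mkG_def)
  finally show ?thesis .
qed

lemma nbok_mkG:
  assumes T: "tblok nb" and u: "u \<in> {..<16}"
  shows "distinct (nb ! u) \<and> set (nb ! u) = {w. adj (mkG nb) u w} \<and> set (nb ! u) \<subseteq> {..<16}"
  using tblokD(1,2)[OF T] u by (auto simp: mkG_def)

lemma WQ_cyc:
  assumes T: "tblok nb"
  shows "WQ (mkG nb) (Qc 8) 8 0 1 = (\<lambda>ws. [0,1] @ ws @ [0]) ` PE (adj (mkG nb)) {..<16} (\<lambda>q. 0 \<in> set (nb ! last q)) 6 [0,1]"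
proof
  have wf: "wf_graph (mkG nb)" using mkG_wf[OF T] .
  show "WQ (mkG nb) (Qc 8) 8 0 1 \<subseteq> (\<lambda>ws. [0,1] @ ws @ [0]) ` PE (adj (mkG nb)) {..<16} (\<lambda>q. 0 \<in> set (nb ! last q)) 6 [0,1]"
  proof
    fix vs assume vs: "vs \<in> WQ (mkG nb) (Qc 8) 8 0 1"
    then have l: "length vs = 9" by (simp add: WQ_def)
    have sv: "set vs \<subseteq> {..<16}" using chain_verts[OF wf, of 8 vs] vs by (simp add: WQ_def mkG_def)
    obtain a b c d e f g h i where v: "vs = [a,b,c,d,e,f,g,h,i]" using len9[OF l] by blast
    have H: "a = 0" "b = 1" "i = 0" "distinct [a,b,c,d,e,f,g,h]" "chain (adj (mkG nb)) [a,b,c,d,e,f,g,h,i]"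
      using vs unfolding v WQ_def Qc_def by (auto simp: numeral_eq_Suc)
    have "[c,d,e,f,g,h] \<in> PE (adj (mkG nb)) {..<16} (\<lambda>q. 0 \<in> set (nb ! last q)) 6 [0,1]"
      using H sv unfolding v PE_def by (simp add: mkG_def)
    then show "vs \<in> (\<lambda>ws. [0,1] @ ws @ [0]) ` PE (adj (mkG nb)) {..<16} (\<lambda>q. 0 \<in> set (nb ! last q)) 6 [0,1]"
      using H v by (intro image_eqI[of _ _ "[c,d,e,f,g,h]"]) simp_all
  qed
  show "(\<lambda>ws. [0,1] @ ws @ [0]) ` PE (adj (mkG nb)) {..<16} (\<lambda>q. 0 \<in> set (nb ! last q)) 6 [0,1] \<subseteq> WQ (mkG nb) (Qc 8) 8 0 1"
  proof
    fix vs assume "vs \<in> (\<lambda>ws. [0,1] @ ws @ [0]) ` PE (adj (mkG nb)) {..<16} (\<lambda>q. 0 \<in> set (nb ! last q)) 6 [0,1]"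
    then obtain ws where ws: "ws \<in> PE (adj (mkG nb)) {..<16} (\<lambda>q. 0 \<in> set (nb ! last q)) 6 [0,1]" and v: "vs = [0,1] @ ws @ [0]" by auto
    have l: "length ws = 6" using ws by (simp add: PE_def)
    obtain c d e f g h where w: "ws = [c,d,e,f,g,h]" using len6[OF l] by blast
    show "vs \<in> WQ (mkG nb) (Qc 8) 8 0 1"
      using ws unfolding v w PE_def WQ_def Qc_def by (simp add: mkG_def numeral_eq_Suc)
  qed
qed

lemma WQ_path:
  assumes T: "tblok nb"
  shows "WQ (mkG nb) (Qp 8) 8 0 1 = (\<lambda>ws. [0,1] @ ws) ` PE (adj (mkG nb)) {..<16} (\<lambda>q. True) 7 [0,1]"
proof
  have wf: "wf_graph (mkG nb)" using mkG_wf[OF T] .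
  show "WQ (mkG nb) (Qp 8) 8 0 1 \<subseteq> (\<lambda>ws. [0,1] @ ws) ` PE (adj (mkG nb)) {..<16} (\<lambda>q. True) 7 [0,1]"
  proof
    fix vs assume vs: "vs \<in> WQ (mkG nb) (Qp 8) 8 0 1"
    then have l: "length vs = 9" by (simp add: WQ_def)
    have sv: "set vs \<subseteq> {..<16}" using chain_verts[OF wf, of 8 vs] vs by (simp add: WQ_def mkG_def)
    obtain a b c d e f g h i where v: "vs = [a,b,c,d,e,f,g,h,i]" using len9[OF l] by blast
    have H: "a = 0" "b = 1" "distinct [a,b,c,d,e,f,g,h,i]" "chain (adj (mkG nb)) [a,b,c,d,e,f,g,h,i]"
      using vs unfolding v WQ_def Qp_def by (auto simp: numeral_eq_Suc)
    have "[c,d,e,f,g,h,i] \<in> PE (adj (mkG nb)) {..<16} (\<lambda>q. True) 7 [0,1]"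
      using H sv unfolding v PE_def by simp
    then show "vs \<in> (\<lambda>ws. [0,1] @ ws) ` PE (adj (mkG nb)) {..<16} (\<lambda>q. True) 7 [0,1]"
      using H v by (intro image_eqI[of _ _ "[c,d,e,f,g,h,i]"]) simp_all
  qed
  show "(\<lambda>ws. [0,1] @ ws) ` PE (adj (mkG nb)) {..<16} (\<lambda>q. True) 7 [0,1] \<subseteq> WQ (mkG nb) (Qp 8) 8 0 1"
  proof
    fix vs assume "vs \<in> (\<lambda>ws. [0,1] @ ws) ` PE (adj (mkG nb)) {..<16} (\<lambda>q. True) 7 [0,1]"
    then obtain ws where ws: "ws \<in> PE (adj (mkG nb)) {..<16} (\<lambda>q. True) 7 [0,1]" and v: "vs = [0,1] @ ws" by auto
    have l: "length ws = 7" using ws by (simp add: PE_def)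
    obtain c d e f g h i where w: "ws = [c,d,e,f,g,h,i]" using len7[OF l] by blast
    show "vs \<in> WQ (mkG nb) (Qp 8) 8 0 1"
      using ws unfolding v w PE_def WQ_def Qp_def by (simp add: numeral_eq_Suc)
  qed
qed

lemma pe_card:
  assumes T: "tblok nb" and one: "1 \<in> set (nb ! 0)"
  shows "card (PE (adj (mkG nb)) {..<16} chk m [0,1]) = cnt nb chk m [0,1]"
proof (rule cnt_correct)
  show "finite {..<16::nat}" by simp
  show "\<And>u. u \<in> {..<16} \<Longrightarrow> distinct (nb ! u) \<and> set (nb ! u) = {w. adj (mkG nb) u w} \<and> set (nb ! u) \<subseteq> {..<16}"
    by (rule nbok_mkG[OF T])
  show "[0::nat,1] \<noteq> []" by simp
  show "last [0::nat,1] \<in> {..<16}" by simp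
  show "distinct [0::nat,1]" by simp
  show "chain (adj (mkG nb)) [0,1]" using one by (simp add: mkG_def)
qed

lemma vt_setup:
  assumes T: "tblok nb"
    and tr: "\<forall>a<16. autchk nb (tr ! a) \<and> tr ! a ! 0 = a"
    and st: "\<forall>j<6. autchk nb (st ! j) \<and> st ! j ! 0 = 0 \<and> st ! j ! 1 = nb ! 0 ! j"
    and Qmap: "\<And>vs \<phi>. Q vs \<Longrightarrow> inj_on \<phi> (set vs) \<Longrightarrow> Q (map \<phi> vs)"
  shows "card (WA (mkG nb) Q 8) = 96 * card (WQ (mkG nb) Q 8 0 1)"
proof -
  have wf: "wf_graph (mkG nb)" using mkG_wf[OF T] .
  have v: "(0::nat) \<in> verts (mkG nb)" "(1::nat) \<in> verts (mkG nb)" by (simp_all add: mkG_def)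
  show ?thesis
    using vt_count[where Q=Q, OF wf _ Qmap v trans_st(1)[OF T tr st] trans_st(2)[OF T tr st]] card_sigma96[OF T]
    by simp
qed

lemma cyc_count:
  assumes T: "tblok nb"
    and tr: "\<forall>a<16. autchk nb (tr ! a) \<and> tr ! a ! 0 = a"
    and st: "\<forall>j<6. autchk nb (st ! j) \<and> st ! j ! 0 = 0 \<and> st ! j ! 1 = nb ! 0 ! j"
    and one: "1 \<in> set (nb ! 0)"
  shows "card {vs. is_cycle (mkG nb) 8 vs} = 96 * cnt nb (\<lambda>q. 0 \<in> set (nb ! last q)) 6 [0,1]"
proof -
  have e: "{vs. is_cycle (mkG nb) 8 vs} = WA (mkG nb) (Qc 8) 8"
    unfolding is_cycle_iff WA_def chain_nth Qc_def by auto
  have "card (WQ (mkG nb) (Qc 8) 8 0 1) = card (PE (adj (mkG nb)) {..<16} (\<lambda>q. 0 \<in> set (nb ! last q)) 6 [0,1])"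
    unfolding WQ_cyc[OF T] by (rule card_image) (auto simp: inj_on_def)
  then show ?thesis using e vt_setup[where Q="Qc 8", OF T tr st Qc_map] pe_card[OF T one] by simp
qed

lemma path_count:
  assumes T: "tblok nb"
    and tr: "\<forall>a<16. autchk nb (tr ! a) \<and> tr ! a ! 0 = a"
    and st: "\<forall>j<6. autchk nb (st ! j) \<and> st ! j ! 0 = 0 \<and> st ! j ! 1 = nb ! 0 ! j"
    and one: "1 \<in> set (nb ! 0)"
  shows "card {vs. is_path (mkG nb) 8 vs} = 96 * cnt nb (\<lambda>q. True) 7 [0,1]"
proof -
  have e: "{vs. is_path (mkG nb) 8 vs} = WA (mkG nb) (Qp 8) 8"
    unfolding is_path_iff WA_def chain_nth Qp_def by auto
  have "card (WQ (mkG nb) (Qp 8) 8 0 1) = card (PE (adj (mkG nb)) {..<16} (\<lambda>q. True) 7 [0,1])"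
    unfolding WQ_path[OF T] by (rule card_image) (auto simp: inj_on_def)
  then show ?thesis using e vt_setup[where Q="Qp 8", OF T tr st Qp_map] pe_card[OF T one] by simp
qed

definition nbR :: "nat list list" where "nbR = [[1, 2, 3, 4, 8, 12], [0, 2, 3, 5, 9, 13], [0, 1, 3, 6, 10, 14], [0, 1, 2, 7, 11, 15], [0, 5, 6, 7, 8, 12], [1, 4, 6, 7, 9, 13], [2, 4, 5, 7, 10, 14], [3, 4, 5, 6, 11, 15], [0, 4, 9, 10, 11, 12], [1, 5, 8, 10, 11, 13], [2, 6, 8, 9, 11, 14], [3, 7, 8, 9, 10, 15], [0, 4, 8, 13, 14, 15], [1, 5, 9, 12, 14, 15], [2, 6, 10, 12, 13, 15], [3, 7, 11, 12, 13, 14]]"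

lemma nbR_rows: "nbR ! 0 = [1, 2, 3, 4, 8, 12]" "nbR ! 1 = [0, 2, 3, 5, 9, 13]" "nbR ! 2 = [0, 1, 3, 6, 10, 14]" "nbR ! 3 = [0, 1, 2, 7, 11, 15]" "nbR ! 4 = [0, 5, 6, 7, 8, 12]" "nbR ! 5 = [1, 4, 6, 7, 9, 13]" "nbR ! 6 = [2, 4, 5, 7, 10, 14]" "nbR ! 7 = [3, 4, 5, 6, 11, 15]" "nbR ! 8 = [0, 4, 9, 10, 11, 12]" "nbR ! 9 = [1, 5, 8, 10, 11, 13]" "nbR ! 10 = [2, 6, 8, 9, 11, 14]" "nbR ! 11 = [3, 7, 8, 9, 10, 15]" "nbR ! 12 = [0, 4, 8, 13, 14, 15]" "nbR ! 13 = [1, 5, 9, 12, 14, 15]" "nbR ! 14 = [2, 6, 10, 12, 13, 15]" "nbR ! 15 = [3, 7, 11, 12, 13, 14]"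
  by (simp_all add: nbR_def)

lemmas nbR_rows1 = nbR_rows[unfolded One_nat_def]

definition trR :: "nat list list" where "trR = [[0, 1, 2, 3, 4, 5, 6, 7, 8, 9, 10, 11, 12, 13, 14, 15], [1, 0, 2, 3, 5, 4, 6, 7, 9, 8, 10, 11, 13, 12, 14, 15], [2, 0, 1, 3, 6, 4, 5, 7, 10, 8, 9, 11, 14, 12, 13, 15], [3, 0, 1, 2, 7, 4, 5, 6, 11, 8, 9, 10, 15, 12, 13, 14], [4, 0, 8, 12, 5, 1, 9, 13, 6, 2, 10, 14, 7, 3, 11, 15], [5, 1, 9, 13, 4, 0, 8, 12, 6, 2, 10, 14, 7, 3, 11, 15], [6, 2, 10, 14, 4, 0, 8, 12, 5, 1, 9, 13, 7, 3, 11, 15], [7, 3, 11, 15, 4, 0, 8, 12, 5, 1, 9, 13, 6, 2, 10, 14], [8, 0, 4, 12, 9, 1, 5, 13, 10, 2, 6, 14, 11, 3, 7, 15], [9, 1, 5, 13, 8, 0, 4, 12, 10, 2, 6, 14, 11, 3, 7, 15], [10, 2, 6, 14, 8, 0, 4, 12, 9, 1, 5, 13, 11, 3, 7, 15], [11, 3, 7, 15, 8, 0, 4, 12, 9, 1, 5, 13, 10, 2, 6, 14], [12, 0, 4, 8, 13, 1, 5, 9, 14, 2, 6, 10, 15, 3, 7, 11], [13, 1, 5, 9, 12, 0, 4, 8, 14, 2, 6, 10, 15, 3, 7, 11], [14, 2, 6, 10, 12, 0, 4, 8, 13, 1, 5, 9, 15, 3, 7, 11], [15, 3, 7, 11, 12,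 0, 4, 8, 13, 1, 5, 9, 14, 2, 6, 10]]"

lemma trR_rows: "trR ! 0 = [0, 1, 2, 3, 4, 5, 6, 7, 8, 9, 10, 11, 12, 13, 14, 15]" "trR ! 1 = [1, 0, 2, 3, 5, 4, 6, 7, 9, 8, 10, 11, 13, 12, 14, 15]" "trR ! 2 = [2, 0, 1, 3, 6, 4, 5, 7, 10, 8, 9, 11, 14, 12, 13, 15]" "trR ! 3 = [3, 0, 1, 2, 7, 4, 5, 6, 11, 8, 9, 10, 15, 12, 13, 14]" "trR ! 4 = [4, 0, 8, 12, 5, 1, 9, 13, 6, 2, 10, 14, 7, 3, 11, 15]" "trR ! 5 = [5, 1, 9, 13, 4, 0, 8, 12, 6, 2, 10, 14, 7, 3, 11, 15]" "trR ! 6 = [6, 2, 10, 14, 4, 0, 8, 12, 5, 1, 9, 13, 7, 3, 11, 15]" "trR ! 7 = [7, 3, 11, 15, 4, 0, 8, 12, 5, 1, 9, 13, 6, 2, 10, 14]" "trR ! 8 = [8, 0, 4, 12, 9, 1, 5, 13, 10, 2, 6, 14, 11, 3, 7, 15]" "trR ! 9 = [9, 1, 5, 13, 8, 0, 4, 12, 10, 2, 6, 14, 11, 3, 7, 15]" "trR ! 10 = [10, 2, 6, 14, 8, 0, 4, 12, 9, 1, 5, 13, 11, 3, 7, 15]" "trR ! 11 = [11, 3, 7, 15, 8, 0, 4, 12, 9, 1, 5, 13, 10, 2, 6, 14]" "trR ! 12 = [12, 0, 4, 8, 13, 1, 5, 9, 14, 2, 6, 10, 15, 3, 7, 11]" "trR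 ! 13 = [13, 1, 5, 9, 12, 0, 4, 8, 14, 2, 6, 10, 15, 3, 7, 11]" "trR ! 14 = [14, 2, 6, 10, 12, 0, 4, 8, 13, 1, 5, 9, 15, 3, 7, 11]" "trR ! 15 = [15, 3, 7, 11, 12, 0, 4, 8, 13, 1, 5, 9, 14, 2, 6, 10]"
  by (simp_all add: trR_def)

lemmas trR_rows1 = trR_rows[unfolded One_nat_def]

definition stR :: "nat list list" where "stR = [[0, 1, 2, 3, 4, 5, 6, 7, 8, 9, 10, 11, 12, 13, 14, 15], [0, 2, 1, 3, 4, 6, 5, 7, 8, 10, 9, 11, 12, 14, 13, 15], [0, 3, 1, 2, 4, 7, 5, 6, 8, 11, 9, 10, 12, 15, 13, 14], [0, 4, 8, 12, 1, 5, 9, 13, 2, 6, 10, 14, 3, 7, 11, 15], [0, 8, 4, 12, 1, 9, 5, 13, 2, 10, 6, 14, 3, 11, 7, 15], [0, 12, 4, 8, 1, 13, 5, 9, 2, 14, 6, 10, 3, 15, 7, 11]]"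

lemma stR_rows: "stR ! 0 = [0, 1, 2, 3, 4, 5, 6, 7, 8, 9, 10, 11, 12, 13, 14, 15]" "stR ! 1 = [0, 2, 1, 3, 4, 6, 5, 7, 8, 10, 9, 11, 12, 14, 13, 15]" "stR ! 2 = [0, 3, 1, 2, 4, 7, 5, 6, 8, 11, 9, 10, 12, 15, 13, 14]" "stR ! 3 = [0, 4, 8, 12, 1, 5, 9, 13, 2, 6, 10, 14, 3, 7, 11, 15]" "stR ! 4 = [0, 8, 4, 12, 1, 9, 5, 13, 2, 10, 6, 14, 3, 11, 7, 15]" "stR ! 5 = [0, 12, 4, 8, 1, 13, 5, 9, 2, 14, 6, 10, 3, 15, 7, 11]"
  by (simp_all add: stR_def)

lemmas stR_rows1 = stR_rows[unfolded One_nat_def]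

definition nbS :: "nat list list" where "nbS = [[1, 3, 4, 5, 12, 15], [0, 2, 5, 6, 12, 13], [1, 3, 6, 7, 13, 14], [0, 2, 4, 7, 14, 15], [0, 3, 5, 7, 8, 9], [0, 1, 4, 6, 9, 10], [1, 2, 5, 7, 10, 11], [2, 3, 4, 6, 8, 11], [4, 7, 9, 11, 12, 13], [4, 5, 8, 10, 13, 14], [5, 6, 9, 11, 14, 15], [6, 7, 8, 10, 12, 15], [0, 1, 8, 11, 13, 15], [1, 2, 8, 9, 12, 14], [2, 3, 9, 10, 13, 15], [0, 3, 10, 11, 12, 14]]"

lemma nbS_rows: "nbS ! 0 = [1, 3, 4, 5, 12, 15]" "nbS ! 1 = [0, 2, 5, 6, 12, 13]" "nbS ! 2 = [1, 3, 6, 7, 13, 14]" "nbS ! 3 = [0, 2, 4, 7, 14, 15]" "nbS ! 4 = [0, 3, 5, 7, 8, 9]" "nbS ! 5 = [0, 1, 4, 6, 9, 10]" "nbS ! 6 = [1, 2, 5, 7, 10, 11]" "nbS ! 7 = [2, 3, 4, 6, 8, 11]" "nbS ! 8 = [4, 7, 9, 11, 12, 13]" "nbS ! 9 = [4, 5, 8, 10, 13, 14]" "nbS ! 10 = [5, 6, 9, 11, 14, 15]" "nbS ! 11 = [6, 7, 8, 10, 12, 15]" "nbS ! 12 = [0, 1, 8, 11, 13, 15]" "nbS ! 13 = [1, 2, 8, 9, 12, 14]" "nbS ! 14 = [2, 3, 9, 10, 13, 15]" "nbS ! 15 = [0, 3, 10, 11, 12, 14]"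
  by (simp_all add: nbS_def)

lemmas nbS_rows1 = nbS_rows[unfolded One_nat_def]

definition trS :: "nat list list" where "trS = [[0, 1, 2, 3, 4, 5, 6, 7, 8, 9, 10, 11, 12, 13, 14, 15], [1, 0, 3, 2, 6, 5, 4, 7, 11, 10, 9, 8, 12, 15, 14, 13], [2, 1, 0, 3, 7, 6, 5, 4, 8, 11, 10, 9, 13, 12, 15, 14], [3, 0, 1, 2, 7, 4, 5, 6, 11, 8, 9, 10, 15, 12, 13, 14], [4, 0, 12, 8, 7, 3, 15, 11, 6, 2, 14, 10, 5, 1, 13, 9], [5, 0, 15, 10, 6, 1, 12, 11, 7, 2, 13, 8, 4, 3, 14, 9], [6, 1, 12, 11, 7, 2, 13, 8, 4, 3, 14, 9, 5, 0, 15, 10], [7, 2, 13, 8, 4, 3, 14, 9, 5, 0, 15, 10, 6, 1, 12, 11], [8, 4, 0, 12, 11, 7, 3, 15, 10, 6, 2, 14, 9, 5, 1, 13], [9, 4, 3, 14, 10, 5, 0, 15, 11, 6, 1, 12, 8, 7, 2, 13], [10, 5, 0, 15, 11, 6, 1, 12, 8, 7, 2, 13, 9, 4, 3, 14], [11, 6, 1, 12, 8, 7, 2, 13, 9, 4, 3, 14, 10, 5, 0, 15], [12, 0, 4, 8, 11, 15, 3, 7, 6, 10, 14, 2, 1, 5, 9, 13], [13, 1, 5, 9, 8, 12, 0, 4, 7, 11, 15, 3, 2, 6, 10, 14], [14, 2, 6, 10, 9, 13, 1, 5, 4, 8, 12, 0, 3, 7, 11, 15], [15, 0, 5, 10, 11,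 12, 1, 6, 7, 8, 13, 2, 3, 4, 9, 14]]"

lemma trS_rows: "trS ! 0 = [0, 1, 2, 3, 4, 5, 6, 7, 8, 9, 10, 11, 12, 13, 14, 15]" "trS ! 1 = [1, 0, 3, 2, 6, 5, 4, 7, 11, 10, 9, 8, 12, 15, 14, 13]" "trS ! 2 = [2, 1, 0, 3, 7, 6, 5, 4, 8, 11, 10, 9, 13, 12, 15, 14]" "trS ! 3 = [3, 0, 1, 2, 7, 4, 5, 6, 11, 8, 9, 10, 15, 12, 13, 14]" "trS ! 4 = [4, 0, 12, 8, 7, 3, 15, 11, 6, 2, 14, 10, 5, 1, 13, 9]" "trS ! 5 = [5, 0, 15, 10, 6, 1, 12, 11, 7, 2, 13, 8, 4, 3, 14, 9]" "trS ! 6 = [6, 1, 12, 11, 7, 2, 13, 8, 4, 3, 14, 9, 5, 0, 15, 10]" "trS ! 7 = [7, 2, 13, 8, 4, 3, 14, 9, 5, 0, 15, 10, 6, 1, 12, 11]" "trS ! 8 = [8, 4, 0, 12, 11, 7, 3, 15, 10, 6, 2, 14, 9, 5, 1, 13]" "trS ! 9 = [9, 4, 3, 14, 10, 5, 0, 15, 11, 6, 1, 12, 8, 7, 2, 13]" "trS ! 10 = [10, 5, 0, 15, 11, 6, 1, 12, 8, 7, 2, 13, 9, 4, 3, 14]" "trS ! 11 = [11, 6, 1, 12, 8, 7, 2, 13, 9, 4, 3, 14, 10, 5, 0, 15]" "trS ! 12 = [12, 0, 4, 8, 11, 15, 3, 7, 6, 10, 14, 2, 1, 5, 9, 13]" "trS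 ! 13 = [13, 1, 5, 9, 8, 12, 0, 4, 7, 11, 15, 3, 2, 6, 10, 14]" "trS ! 14 = [14, 2, 6, 10, 9, 13, 1, 5, 4, 8, 12, 0, 3, 7, 11, 15]" "trS ! 15 = [15, 0, 5, 10, 11, 12, 1, 6, 7, 8, 13, 2, 3, 4, 9, 14]"
  by (simp_all add: trS_def)

lemmas trS_rows1 = trS_rows[unfolded One_nat_def]

definition stS :: "nat list list" where "stS = [[0, 1, 2, 3, 4, 5, 6, 7, 8, 9, 10, 11, 12, 13, 14, 15], [0, 3, 2, 1, 5, 4, 7, 6, 10, 9, 8, 11, 15, 14, 13, 12], [0, 4, 8, 12, 1, 5, 9, 13, 2, 6, 10, 14, 3, 7, 11, 15], [0, 5, 10, 15, 3, 4, 9, 14, 2, 7, 8, 13, 1, 6, 11, 12], [0, 12, 8, 4, 3, 15, 11, 7, 2, 14, 10, 6, 1, 13, 9, 5], [0, 15, 10, 5, 1, 12, 11, 6, 2, 13, 8, 7, 3, 14, 9, 4]]"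

lemma stS_rows: "stS ! 0 = [0, 1, 2, 3, 4, 5, 6, 7, 8, 9, 10, 11, 12, 13, 14, 15]" "stS ! 1 = [0, 3, 2, 1, 5, 4, 7, 6, 10, 9, 8, 11, 15, 14, 13, 12]" "stS ! 2 = [0, 4, 8, 12, 1, 5, 9, 13, 2, 6, 10, 14, 3, 7, 11, 15]" "stS ! 3 = [0, 5, 10, 15, 3, 4, 9, 14, 2, 7, 8, 13, 1, 6, 11, 12]" "stS ! 4 = [0, 12, 8, 4, 3, 15, 11, 7, 2, 14, 10, 6, 1, 13, 9, 5]" "stS ! 5 = [0, 15, 10, 5, 1, 12, 11, 6, 2, 13, 8, 7, 3, 14, 9, 4]"
  by (simp_all add: stS_def)

lemmas stS_rows1 = stS_rows[unfolded One_nat_def]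


lemma tblok_R: "tblok nbR"
  unfolding tblok_def all16 by (simp add: nbR_rows nbR_rows1)

lemma tr_R: "\<forall>a<16. autchk nbR (trR ! a) \<and> trR ! a ! 0 = a"
  unfolding autchk_def all16 by (simp add: nbR_rows nbR_rows1 trR_rows trR_rows1)

lemma st_R: "\<forall>j<6. autchk nbR (stR ! j) \<and> stR ! j ! 0 = 0 \<and> stR ! j ! 1 = nbR ! 0 ! j"
  unfolding autchk_def all16 all6 by (simp add: nbR_rows nbR_rows1 stR_rows stR_rows1)

lemma one_R: "1 \<in> set (nbR ! 0)"
  by (simp add: nbR_rows)

lemma tblok_S: "tblok nbS"
  unfolding tblok_def all16 by (simp add: nbS_rows nbS_rows1)

lemma tr_S: "\<forall>a<16. autchk nbS (trS ! a) \<and> trS ! a ! 0 = a"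
  unfolding autchk_def all16 by (simp add: nbS_rows nbS_rows1 trS_rows trS_rows1)

lemma st_S: "\<forall>j<6. autchk nbS (stS ! j) \<and> stS ! j ! 0 = 0 \<and> stS ! j ! 1 = nbS ! 0 ! j"
  unfolding autchk_def all16 all6 by (simp add: nbS_rows nbS_rows1 stS_rows stS_rows1)

lemma one_S: "1 \<in> set (nbS ! 0)"
  by (simp add: nbS_rows)

fun cntP :: "nat list list \<Rightarrow> nat \<Rightarrow> nat list \<Rightarrow> nat"
and cntPl :: "nat list list \<Rightarrow> nat \<Rightarrow> nat list \<Rightarrow> nat list \<Rightarrow> nat" where
  "cntP nb 0 q = 1"
| "cntP nb (Suc 0) q = length (filter (\<lambda>w. w \<notin> set q) (nb ! last q))"
| "cntP nb (Suc (Suc m)) q = cntPl nb (Suc m) q (nb ! last q)"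
| "cntPl nb m q [] = 0"
| "cntPl nb m q (w#ws) = (if w \<in> set q then 0 else cntP nb m (q@[w])) + cntPl nb m q ws"

lemma cntPl_eq: "cntPl nb m q ws = sum_list (map (\<lambda>w. cntP nb m (q@[w])) (filter (\<lambda>w. w \<notin> set q) ws))"
  by (induction ws) auto

lemma sum_list_ones: "sum_list (map (\<lambda>w. Suc 0) xs) = length xs"
  by (induction xs) auto

lemma cntP_eq: "cntP nb m q = cnt nb (\<lambda>_. True) m q"
proof (induction m arbitrary: q rule: nat_less_induct)
  case (1 m)
  show ?case
  proof (cases m)
    case 0
    then show ?thesis by simp
  next
    case (Suc m')
    show ?thesis
    proof (cases m')
      case 0
      then show ?thesis using Suc by (simp add: cntl_eq sum_list_ones comp_def)
    next
      case (Suc m'')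
      have "cntP nb m q = sum_list (map (\<lambda>w. cntP nb m' (q@[w])) (filter (\<lambda>w. w \<notin> set q) (nb ! last q)))"
        using \<open>m = Suc m'\<close> Suc by (simp add: cntPl_eq)
      also have "\<dots> = sum_list (map (\<lambda>w. cnt nb (\<lambda>_. True) m' (q@[w])) (filter (\<lambda>w. w \<notin> set q) (nb ! last q)))"
        using 1 \<open>m = Suc m'\<close> by simp
      also have "\<dots> = cnt nb (\<lambda>_. True) m q" using \<open>m = Suc m'\<close> by (simp add: cntl_eq)
      finally show ?thesis .
    qed
  qed
qed


lemma cntR_cyc: "cnt nbR (\<lambda>q. 0 \<in> set (nbR ! last q)) 6 [0,1] = 1992"
proof -
  have e: "(6::nat) = Suc (Suc (Suc (Suc (Suc (Suc 0)))))" by simp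
  show ?thesis by (simp only: e) (simp add: nbR_rows nbR_rows1)
qed

lemma cntR_path: "cnt nbR (\<lambda>_. True) 7 [0,1] = 18336"
proof -
  have e: "(7::nat) = Suc (Suc (Suc (Suc (Suc (Suc (Suc 0))))))" by simp
  show ?thesis unfolding cntP_eq[symmetric] by (simp only: e) (simp add: nbR_rows nbR_rows1)
qed

lemma cyc_R: "card {vs. is_cycle (mkG nbR) 8 vs} = 96 * 1992"
  using cyc_count[OF tblok_R tr_R st_R one_R] cntR_cyc by simp

lemma path_R: "card {vs. is_path (mkG nbR) 8 vs} = 96 * 18336"
  using path_count[OF tblok_R tr_R st_R one_R] cntR_path by simp

lemma cntS_cyc: "cnt nbS (\<lambda>q. 0 \<in> set (nbS ! last q)) 6 [0,1] = 1948"
proof -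
  have e: "(6::nat) = Suc (Suc (Suc (Suc (Suc (Suc 0)))))" by simp
  show ?thesis by (simp only: e) (simp add: nbS_rows nbS_rows1)
qed

lemma cntS_path: "cnt nbS (\<lambda>_. True) 7 [0,1] = 18280"
proof -
  have e: "(7::nat) = Suc (Suc (Suc (Suc (Suc (Suc (Suc 0))))))" by simp
  show ?thesis unfolding cntP_eq[symmetric] by (simp only: e) (simp add: nbS_rows nbS_rows1)
qed

lemma cyc_S: "card {vs. is_cycle (mkG nbS) 8 vs} = 96 * 1948"
  using cyc_count[OF tblok_S tr_S st_S one_S] cntS_cyc by simp

lemma path_S: "card {vs. is_path (mkG nbS) 8 vs} = 96 * 18280"
  using path_count[OF tblok_S tr_S st_S one_S] cntS_path by simp

theorem proposition1:
  shows "\<not> can_count_graph_level subgraph_mpnns (count_cycles 8) \<and>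
         \<not> can_count_graph_level subgraph_mpnns (count_paths 8)"
proof -
  let ?G1 = "mkG nbR" and ?G2 = "mkG nbS"
  have wf1: "wf_graph ?G1" and wf2: "wf_graph ?G2" using mkG_wf tblok_R tblok_S by blast+
  have same: "\<forall>f\<in>subgraph_mpnns. f ?G1 = f ?G2"
    unfolding subgraph_mpnns_def using srg_indist[OF mkG_srg[OF tblok_R] mkG_srg[OF tblok_S]] by blast
  have c: "count_cycles 8 ?G1 \<noteq> count_cycles 8 ?G2"
  proof
    assume eq: "count_cycles 8 ?G1 = count_cycles 8 ?G2"
    have "card {vs. is_cycle ?G1 8 vs} = card {vs. is_cycle ?G2 8 vs}"
      using cycles_card[OF wf1, of 8] cycles_card[OF wf2, of 8] eq by simp
    then show False using cyc_R cyc_S by simp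
  qed
  have p: "count_paths 8 ?G1 \<noteq> count_paths 8 ?G2"
  proof
    assume eq: "count_paths 8 ?G1 = count_paths 8 ?G2"
    have "card {vs. is_path ?G1 8 vs} = card {vs. is_path ?G2 8 vs}"
      using paths_card[OF wf1, of 8] paths_card[OF wf2, of 8] eq by simp
    then show False using path_R path_S by simp
  qed
  show ?thesis unfolding can_count_graph_level_def using wf1 wf2 same c p by metis
qed

end
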